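(* Let $f,g_1,\dots,g_m,h_1,\dots,h_l\in\mathbb{R}[\mathbf{x}]$ and consider the POP of minimizing $f$ over $S(g)\cap V(h)$. If $R-\|\mathbf{x}\|_2^2\in\{g_1,\dots,g_m\}$ for some $R>0$, then $(0,\infty)\subseteq Q_k^\circ(g)$ for every integer $k\ge k_{\min}$, and therefore the POP has the constant trace property (CTP).
   Context: $\mathbf{x}=(x_1,\dots,x_n)$; for $p\in\mathbb{R}[\mathbf{x}]$, $\lceil p\rceil:=\lceil\deg(p)/2\rceil$. $\mathbb{N}^n_d:=\{\alpha\in\mathbb{N}^n:|\alpha|\le d\}$, $s(d):=\binom{n+d}{n}$, $\mathbf{v}_d=(\mathbf{x}^\alpha)_{\alpha\in\mathbb{N}^n_d}$. $g=\{g_i\}_{i\in[m]}$, $h=\{h_j\}_{j\in[l]}$, $S(g):=\{\mathbf{x}:g_i(\mathbf{x})\ge0\ \forall i\}$, $V(h):=\{\mathbf{x}:h_j(\mathbf{x})=0\ \forall j\}$, $k_{\min}:=\max\{\lceil f\rceil,\lceil g_i\rceil,\lceil h_j\rceil\}$. $Q_k^\circ(g):=\{\mathbf{v}_k^\top\mathbf{G}_0\mathbf{v}_k+\sum_{i\in[m]}g_i\mathbf{v}_{k-\lceil g_i\rceil}^\top\mathbf{G}_i\mathbf{v}_{k-\lceil g_i\rceil}:\ \mathbf{G}_i\succ0\}$ (all $\mathbf{G}_i$ real symmetric positive definite). For $\mathbf{y}=(y_\alpha)_{\alpha\in\mathbb{N}^n_{2k}}$: $\mathbf{M}_d(\mathbf{y})=(y_{\alpha+\beta})_{\alpha,\beta\in\mathbb{N}^n_d}$,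 and for $q=\sum_\gamma q_\gamma\mathbf{x}^\gamma$, $\mathbf{M}_d(q\mathbf{y})=(\sum_\gamma q_\gamma y_{\alpha+\beta+\gamma})_{\alpha,\beta\in\mathbb{N}^n_d}$. $\mathcal{S}_k$: real symmetric block-diagonal matrices $\mathrm{diag}(\mathbf{X}_0,\dots,\mathbf{X}_m)$ with $\mathbf{X}_0$ of size $s(k)$, $\mathbf{X}_i$ of size $s(k-\lceil g_i\rceil)$. $\mathbf{D}_k(\mathbf{y}):=\mathrm{diag}(\mathbf{M}_k(\mathbf{y}),\mathbf{M}_{k-\lceil g_1\rceil}(g_1\mathbf{y}),\dots,\mathbf{M}_{k-\lceil g_m\rceil}(g_m\mathbf{y}))$. CTP: for every integer $k\ge k_{\min}$ there exist $a_k>0$ and a positive definite $\mathbf{P}_k\in\mathcal{S}_k$ such that every $\mathbf{y}\in\mathbb{R}^{s(2k)}$ with $\mathbf{M}_{k-\lceil h_j\rceil}(h_j\mathbf{y})=0$ ($j\in[l]$) and $y_{\mathbf{0}}=1$ satisfies $\mathrm{trace}(\mathbf{P}_k\mathbf{D}_k(\mathbf{y})\mathbf{P}_k)=a_k$. *)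

theory Defs
  imports Complex_Main
begin

text \<open>
Multivariate real polynomials in the variables x_0, ..., x_(n-1) are represented by their
coefficient functions: a monomial (exponent vector) is a function  alpha :: nat => nat
(with alpha i = 0 for i >= n), and a polynomial is a function from exponent vectors to
real coefficients with finitely many nonzero coefficients, all on exponent vectors in n variables.
\<close>

type_synonym mono = "nat \<Rightarrow> nat"
type_synonym rpoly = "mono \<Rightarrow> real"

definition mdeg :: "nat \<Rightarrow> mono \<Rightarrow> nat" where
  "mdeg n \<alpha> = (\<Sum>i<n. \<alpha> i)"

definition Nmon :: "nat \<Rightarrow> nat \<Rightarrow> mono set" where
  "Nmon n d = {\<alpha>. (\<forall>i\<ge>n. \<alpha> i = 0) \<and> mdeg n \<alpha> \<le> d}"

definition zero_mono :: mono where
  "zero_mono = (\<lambda>_. 0)"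

definition is_poly :: "nat \<Rightarrow> rpoly \<Rightarrow> bool" where
  "is_poly n p \<longleftrightarrow> (\<exists>d. \<forall>\<alpha>. p \<alpha> \<noteq> 0 \<longrightarrow> \<alpha> \<in> Nmon n d)"

definition pdeg :: "nat \<Rightarrow> rpoly \<Rightarrow> nat" where
  "pdeg n p = (if {\<alpha>. p \<alpha> \<noteq> 0} = {} then 0 else Max (mdeg n ` {\<alpha>. p \<alpha> \<noteq> 0}))"

definition hdeg :: "nat \<Rightarrow> rpoly \<Rightarrow> nat" where
  "hdeg n p = nat \<lceil>real (pdeg n p) / 2\<rceil>"

definition pmul :: "rpoly \<Rightarrow> rpoly \<Rightarrow> rpoly" where
  "pmul p q = (\<lambda>\<gamma>. \<Sum>\<alpha>\<in>{\<alpha>. \<forall>i. \<alpha> i \<le> \<gamma> i}. p \<alpha> * q (\<lambda>i. \<gamma> i - \<alpha> i))"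

definition pconst :: "real \<Rightarrow> rpoly" where
  "pconst c = (\<lambda>\<alpha>. if \<alpha> = zero_mono then c else 0)"

text \<open>The polynomial R - ||x||_2^2 = R - sum_j x_j^2 in n variables.\<close>
definition ball_poly :: "nat \<Rightarrow> real \<Rightarrow> rpoly" where
  "ball_poly n R = (\<lambda>\<alpha>. if \<alpha> = zero_mono then R
      else if (\<exists>j<n. \<alpha> = (\<lambda>i. if i = j then 2 else 0)) then -1 else 0)"

text \<open>Matrices indexed by N^n_d: functions mono => mono => real; only entries on
  Nmon n d matter. Real symmetric positive definite matrix of size s(d).\<close>
definition pos_def :: "nat \<Rightarrow> nat \<Rightarrow> (mono \<Rightarrow> mono \<Rightarrow> real) \<Rightarrow> bool" where
  "pos_def n d G \<longleftrightarrow>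
     (\<forall>\<alpha>\<in>Nmon n d. \<forall>\<beta>\<in>Nmon n d. G \<alpha> \<beta> = G \<beta> \<alpha>) \<and>
     (\<forall>u :: mono \<Rightarrow> real. (\<exists>\<alpha>\<in>Nmon n d. u \<alpha> \<noteq> 0) \<longrightarrow>
         (\<Sum>\<alpha>\<in>Nmon n d. \<Sum>\<beta>\<in>Nmon n d. u \<alpha> * G \<alpha> \<beta> * u \<beta>) > 0)"

text \<open>The polynomial v_d^T G v_d.\<close>
definition gram_poly :: "nat \<Rightarrow> nat \<Rightarrow> (mono \<Rightarrow> mono \<Rightarrow> real) \<Rightarrow> rpoly" where
  "gram_poly n d G = (\<lambda>\<gamma>. \<Sum>\<alpha>\<in>Nmon n d. \<Sum>\<beta>\<in>Nmon n d.
      if (\<lambda>i. \<alpha> i + \<beta> i) = \<gamma> then G \<alpha> \<beta> else 0)"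

definition Qcirc :: "nat \<Rightarrow> nat \<Rightarrow> (nat \<Rightarrow> rpoly) \<Rightarrow> nat \<Rightarrow> rpoly set" where
  "Qcirc n m g k = {p. \<exists>G0 G. pos_def n k G0 \<and> (\<forall>i<m. pos_def n (k - hdeg n (g i)) (G i)) \<and>
      p = (\<lambda>\<gamma>. gram_poly n k G0 \<gamma> +
              (\<Sum>i<m. pmul (g i) (gram_poly n (k - hdeg n (g i)) (G i)) \<gamma>))}"

definition kmin :: "nat \<Rightarrow> rpoly \<Rightarrow> nat \<Rightarrow> (nat \<Rightarrow> rpoly) \<Rightarrow> nat \<Rightarrow> (nat \<Rightarrow> rpoly) \<Rightarrow> nat" where
  "kmin n f m g l h = Max ({hdeg n f} \<union> hdeg n ` g ` {..<m} \<union> hdeg n ` h ` {..<l})"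

definition loc_mat :: "nat \<Rightarrow> rpoly \<Rightarrow> (mono \<Rightarrow> real) \<Rightarrow> mono \<Rightarrow> mono \<Rightarrow> real" where
  "loc_mat n q y = (\<lambda>\<alpha> \<beta>. \<Sum>\<gamma>\<in>{\<gamma>. q \<gamma> \<noteq> 0}. q \<gamma> * y (\<lambda>i. \<alpha> i + \<beta> i + \<gamma> i))"

definition mom_mat :: "(mono \<Rightarrow> real) \<Rightarrow> mono \<Rightarrow> mono \<Rightarrow> real" where
  "mom_mat y = (\<lambda>\<alpha> \<beta>. y (\<lambda>i. \<alpha> i + \<beta> i))"

definition trace_XMX :: "nat \<Rightarrow> nat \<Rightarrow> (mono \<Rightarrow> mono \<Rightarrow> real) \<Rightarrow> (mono \<Rightarrow> mono \<Rightarrow> real) \<Rightarrow> real" where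
  "trace_XMX n d X M = (\<Sum>\<alpha>\<in>Nmon n d. \<Sum>\<beta>\<in>Nmon n d. \<Sum>\<gamma>\<in>Nmon n d. X \<alpha> \<beta> * M \<beta> \<gamma> * X \<gamma> \<alpha>)"

text \<open>Constant trace property. P_k = diag(X_0, ..., X_m) is positive definite iff every block
  is; trace(P_k D_k(y) P_k) is the sum of the blockwise traces.\<close>
definition CTP :: "nat \<Rightarrow> rpoly \<Rightarrow> nat \<Rightarrow> (nat \<Rightarrow> rpoly) \<Rightarrow> nat \<Rightarrow> (nat \<Rightarrow> rpoly) \<Rightarrow> bool" where
  "CTP n f m g l h \<longleftrightarrow> (\<forall>k\<ge>kmin n f m g l h. \<exists>a>0. \<exists>X0 X.
     pos_def n k X0 \<and> (\<forall>i<m. pos_def n (k - hdeg n (g i)) (X i)) \<and>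
     (\<forall>y :: mono \<Rightarrow> real.
        (\<forall>j<l. \<forall>\<alpha>\<in>Nmon n (k - hdeg n (h j)). \<forall>\<beta>\<in>Nmon n (k - hdeg n (h j)).
            loc_mat n (h j) y \<alpha> \<beta> = 0) \<and> y zero_mono = 1 \<longrightarrow>
        trace_XMX n k X0 (mom_mat y) +
        (\<Sum>i<m. trace_XMX n (k - hdeg n (g i)) (X i) (loc_mat n (g i) y)) = a))"

end

theory Submission
  imports Defs
begin

lemma fin_Nmon: "finite (Nmon n d)"
proof -
  have "Nmon n d \<subseteq> {f. \<forall>x. (x \<in> {..<n} \<longrightarrow> f x \<in> {0..d}) \<and> (x \<notin> {..<n} \<longrightarrow> f x = 0)}"
  proof
    fix \<alpha> assume a: "\<alpha> \<in> Nmon n d"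
    have "\<alpha> x \<le> d" if "x < n" for x
    proof -
      have "\<alpha> x \<le> (\<Sum>i<n. \<alpha> i)" by (rule member_le_sum) (use that in auto)
      thus ?thesis using a by (auto simp: Nmon_def mdeg_def)
    qed
    thus "\<alpha> \<in> {f. \<forall>x. (x \<in> {..<n} \<longrightarrow> f x \<in> {0..d}) \<and> (x \<notin> {..<n} \<longrightarrow> f x = 0)}"
      using a by (auto simp: Nmon_def)
  qed
  moreover have "finite {f. \<forall>x. (x \<in> {..<n} \<longrightarrow> f x \<in> {0..d}) \<and> (x \<notin> {..<n} \<longrightarrow> f x = (0::nat))}"
    by (rule finite_set_of_finite_funs) auto
  ultimately show ?thesis by (rule finite_subset)
qed

definition ev1 :: "nat \<Rightarrow> nat \<Rightarrow> mono" where "ev1 j c = (\<lambda>i. if i = j then c else 0)"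
definition diagm :: "(mono \<Rightarrow> real) \<Rightarrow> mono \<Rightarrow> mono \<Rightarrow> real" where
  "diagm e = (\<lambda>\<alpha> \<beta>. if \<alpha> = \<beta> then e \<alpha> else 0)"
definition fsupp :: "mono \<Rightarrow> bool" where "fsupp \<gamma> \<longleftrightarrow> finite {i. \<gamma> i \<noteq> 0}"

lemma mdeg_add: "mdeg n (\<lambda>i. \<alpha> i + \<beta> i) = mdeg n \<alpha> + mdeg n \<beta>"
  by (simp add: mdeg_def sum.distrib)

lemma mdeg_ev1: "j < n \<Longrightarrow> mdeg n (ev1 j c) = c"
  by (simp add: mdeg_def ev1_def)

lemma zero_in_Nmon[simp]: "zero_mono \<in> Nmon n d"
  by (simp add: Nmon_def zero_mono_def mdeg_def)

lemma Nmon_add: "\<alpha> \<in> Nmon n a \<Longrightarrow> \<beta> \<in> Nmon n b \<Longrightarrow> (\<lambda>i. \<alpha> i + \<beta> i) \<in> Nmon n (a + b)"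
  by (auto simp: Nmon_def mdeg_add)

lemma Nmon_mono: "a \<le> b \<Longrightarrow> \<alpha> \<in> Nmon n a \<Longrightarrow> \<alpha> \<in> Nmon n b"
  by (auto simp: Nmon_def)

lemma card_Nmon_pos: "card (Nmon n d) > 0"
  using fin_Nmon zero_in_Nmon by (metis card_gt_0_iff empty_iff)

lemma Nmon_fsupp: "\<alpha> \<in> Nmon n d \<Longrightarrow> fsupp \<alpha>"
  unfolding fsupp_def Nmon_def
  by (rule finite_subset[of _ "{..<n}"]) (auto simp: not_less[symmetric])

lemma pmul_infinite: assumes "\<not> fsupp \<gamma>" shows "pmul p q \<gamma> = 0"
proof -
  let ?T = "{\<alpha>. \<forall>i. \<alpha> i \<le> \<gamma> i}"
  have inj: "inj_on (\<lambda>j. ev1 j 1) {i. \<gamma> i \<noteq> 0}"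
    by (rule inj_onI) (metis ev1_def zero_neq_one)
  have sub: "(\<lambda>j. ev1 j 1) ` {i. \<gamma> i \<noteq> 0} \<subseteq> ?T"
    by (auto simp: ev1_def)
  have "infinite ?T"
  proof
    assume "finite ?T"
    hence "finite ((\<lambda>j. ev1 j 1) ` {i. \<gamma> i \<noteq> 0})" using sub finite_subset by blast
    hence "finite {i. \<gamma> i \<noteq> 0}" using inj finite_imageD by blast
    thus False using assms by (simp add: fsupp_def)
  qed
  thus ?thesis by (simp add: pmul_def)
qed

lemma fin_below: assumes "fsupp \<gamma>" shows "finite {\<alpha>. \<forall>i. \<alpha> i \<le> \<gamma> i}"
proof -
  let ?S = "{i. \<gamma> i \<noteq> 0}"
  have "{\<alpha>. \<forall>i. \<alpha> i \<le> \<gamma> i} \<subseteq> {f. \<forall>x. (x \<in> ?S \<longrightarrow> f x \<in> (\<Union>y\<in>?S. {0..\<gamma> y})) \<and> (x \<notin> ?S \<longrightarrow> f x = 0)}"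
    by auto (metis le_zero_eq)
  moreover have "finite {f. \<forall>x. (x \<in> ?S \<longrightarrow> f x \<in> (\<Union>y\<in>?S. {0..\<gamma> y})) \<and> (x \<notin> ?S \<longrightarrow> f x = (0::nat))}"
    by (rule finite_set_of_finite_funs) (use assms in \<open>auto simp: fsupp_def\<close>)
  ultimately show ?thesis by (rule finite_subset)
qed

lemma pmul_fin:
  assumes "fsupp \<gamma>" "finite S" "\<And>\<alpha>. p \<alpha> \<noteq> 0 \<Longrightarrow> \<alpha> \<in> S"
  shows "pmul p q \<gamma> = (\<Sum>\<alpha>\<in>S. if (\<forall>i. \<alpha> i \<le> \<gamma> i) then p \<alpha> * q (\<lambda>i. \<gamma> i - \<alpha> i) else 0)"
proof -
  let ?T = "{\<alpha>. \<forall>i. \<alpha> i \<le> \<gamma> i}"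
  have fT: "finite ?T" using fin_below[OF assms(1)] .
  have "pmul p q \<gamma> = (\<Sum>\<alpha>\<in>?T. p \<alpha> * q (\<lambda>i. \<gamma> i - \<alpha> i))" by (simp add: pmul_def)
  also have "\<dots> = (\<Sum>\<alpha>\<in>?T \<inter> S. p \<alpha> * q (\<lambda>i. \<gamma> i - \<alpha> i))"
    by (rule sum.mono_neutral_right) (use fT assms in auto)
  also have "\<dots> = (\<Sum>\<alpha>\<in>S. if (\<forall>i. \<alpha> i \<le> \<gamma> i) then p \<alpha> * q (\<lambda>i. \<gamma> i - \<alpha> i) else 0)"
    using assms(2) by (simp add: sum.inter_filter[symmetric] Int_commute Collect_conj_eq[symmetric] Int_def)
  finally show ?thesis .
qed


lemma double_inj: "((\<lambda>i. \<alpha> i + \<alpha> i) = (\<lambda>i. \<beta> i + (\<beta> i::nat))) \<longleftrightarrow> \<alpha> = \<beta>"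
  by (auto simp: fun_eq_iff) (metis add_self_div_2)

lemma gram_diag: "gram_poly n d (diagm e) \<delta> = (\<Sum>\<alpha>\<in>Nmon n d. if (\<lambda>i. \<alpha> i + \<alpha> i) = \<delta> then e \<alpha> else 0)"
proof -
  have "gram_poly n d (diagm e) \<delta> = (\<Sum>\<alpha>\<in>Nmon n d. \<Sum>\<beta>\<in>Nmon n d. if \<beta> = \<alpha> then (if (\<lambda>i. \<alpha> i + \<alpha> i) = \<delta> then e \<alpha> else 0) else 0)"
    unfolding gram_poly_def diagm_def
    by (intro sum.cong refl) auto
  also have "\<dots> = (\<Sum>\<alpha>\<in>Nmon n d. if (\<lambda>i. \<alpha> i + \<alpha> i) = \<delta> then e \<alpha> else 0)"
    by (rule sum.cong) (simp_all add: fin_Nmon)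
  finally show ?thesis .
qed

lemma gram_diag_double: "gram_poly n d (diagm e) (\<lambda>i. \<beta> i + \<beta> i) = (if \<beta> \<in> Nmon n d then e \<beta> else 0)"
  unfolding gram_diag double_inj by (simp add: fin_Nmon)

lemma gram_diag_nd: "(\<And>\<beta>. \<beta> \<in> Nmon n d \<Longrightarrow> \<delta> \<noteq> (\<lambda>i. \<beta> i + \<beta> i)) \<Longrightarrow> gram_poly n d (diagm e) \<delta> = 0"
  unfolding gram_diag by (rule sum.neutral) auto

lemma is_poly_supp: assumes "is_poly n p" shows "finite {\<alpha>. p \<alpha> \<noteq> 0}"
  and "p \<alpha> \<noteq> 0 \<Longrightarrow> \<alpha> \<in> Nmon n (pdeg n p)"
proof -
  obtain d where d: "\<forall>\<alpha>. p \<alpha> \<noteq> 0 \<longrightarrow> \<alpha> \<in> Nmon n d" using assms by (auto simp: is_poly_def)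
  show f: "finite {\<alpha>. p \<alpha> \<noteq> 0}" by (rule finite_subset[OF _ fin_Nmon[of n d]]) (use d in auto)
  assume a: "p \<alpha> \<noteq> 0"
  have "mdeg n \<alpha> \<le> Max (mdeg n ` {\<alpha>. p \<alpha> \<noteq> 0})" using f a by (intro Max_ge) auto
  hence "mdeg n \<alpha> \<le> pdeg n p" using a by (auto simp: pdeg_def)
  thus "\<alpha> \<in> Nmon n (pdeg n p)" using d a by (auto simp: Nmon_def)
qed

lemma pdeg_hdeg: "pdeg n p \<le> 2 * hdeg n p"
proof -
  have "real (pdeg n p) / 2 \<le> of_int \<lceil>real (pdeg n p) / 2\<rceil>" by (rule le_of_int_ceiling)
  hence "real (pdeg n p) \<le> 2 * real (nat \<lceil>real (pdeg n p) / 2\<rceil>)" by linarith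
  thus ?thesis unfolding hdeg_def by linarith
qed

lemma gram_supp: "gram_poly n d H \<delta> \<noteq> 0 \<Longrightarrow> \<exists>\<alpha>\<in>Nmon n d. \<exists>\<beta>\<in>Nmon n d. \<delta> = (\<lambda>i. \<alpha> i + \<beta> i)"
proof -
  assume "gram_poly n d H \<delta> \<noteq> 0"
  then obtain \<alpha> where a: "\<alpha> \<in> Nmon n d" "(\<Sum>\<beta>\<in>Nmon n d. if (\<lambda>i. \<alpha> i + \<beta> i) = \<delta> then H \<alpha> \<beta> else 0) \<noteq> 0"
    unfolding gram_poly_def using sum.not_neutral_contains_not_neutral by blast
  then obtain \<beta> where "\<beta> \<in> Nmon n d" "(if (\<lambda>i. \<alpha> i + \<beta> i) = \<delta> then H \<alpha> \<beta> else 0) \<noteq> 0"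
    using sum.not_neutral_contains_not_neutral by blast
  thus ?thesis using a(1) by (auto split: if_splits)
qed

lemma pmul_supp:
  assumes "is_poly n p" "pmul p (gram_poly n d H) \<gamma> \<noteq> 0"
  shows "\<gamma> \<in> Nmon n (pdeg n p + 2 * d)"
proof -
  have fs: "fsupp \<gamma>" using assms(2) pmul_infinite by blast
  have eq: "pmul p (gram_poly n d H) \<gamma> = (\<Sum>\<alpha>\<in>{\<alpha>. p \<alpha> \<noteq> 0}. if (\<forall>i. \<alpha> i \<le> \<gamma> i) then p \<alpha> * gram_poly n d H (\<lambda>i. \<gamma> i - \<alpha> i) else 0)"
    by (rule pmul_fin[OF fs is_poly_supp(1)[OF assms(1)]]) auto
  with assms(2) obtain \<alpha> where a: "p \<alpha> \<noteq> 0" "\<forall>i. \<alpha> i \<le> \<gamma> i" "gram_poly n d H (\<lambda>i. \<gamma> i - \<alpha> i) \<noteq> 0"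
  proof -
    from assms(2) eq have "(\<Sum>\<alpha>\<in>{\<alpha>. p \<alpha> \<noteq> 0}. if (\<forall>i. \<alpha> i \<le> \<gamma> i) then p \<alpha> * gram_poly n d H (\<lambda>i. \<gamma> i - \<alpha> i) else 0) \<noteq> 0" by simp
    then obtain \<alpha> where "\<alpha> \<in> {\<alpha>. p \<alpha> \<noteq> 0}" "(if (\<forall>i. \<alpha> i \<le> \<gamma> i) then p \<alpha> * gram_poly n d H (\<lambda>i. \<gamma> i - \<alpha> i) else 0) \<noteq> 0"
      by (rule sum.not_neutral_contains_not_neutral)
    thus ?thesis using that by (auto split: if_splits)
  qed
  obtain \<beta>1 \<beta>2 where b: "\<beta>1 \<in> Nmon n d" "\<beta>2 \<in> Nmon n d" "(\<lambda>i. \<gamma> i - \<alpha> i) = (\<lambda>i. \<beta>1 i + \<beta>2 i)"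
    using gram_supp[OF a(3)] by blast
  have "\<gamma> = (\<lambda>i. \<alpha> i + (\<lambda>i. \<beta>1 i + \<beta>2 i) i)"
  proof
    fix i show "\<gamma> i = \<alpha> i + (\<lambda>i. \<beta>1 i + \<beta>2 i) i" using a(2)[rule_format, of i] fun_cong[OF b(3), of i] by arith
  qed
  moreover have "(\<lambda>i. \<alpha> i + (\<lambda>i. \<beta>1 i + \<beta>2 i) i) \<in> Nmon n (pdeg n p + (d + d))"
    by (rule Nmon_add[OF is_poly_supp(2)[OF assms(1) a(1)] Nmon_add[OF b(1) b(2)]])
  ultimately show ?thesis by (simp add: mult_2)
qed

lemma mdeg_zero[simp]: "mdeg n zero_mono = 0" by (simp add: mdeg_def zero_mono_def)

lemma ball_supp: "ball_poly n R \<alpha> \<noteq> 0 \<Longrightarrow> \<alpha> \<in> insert zero_mono ((\<lambda>j. ev1 j 2) ` {..<n})"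
  by (auto simp: ball_poly_def ev1_def split: if_splits)

lemma ev1_ne_zero: "c \<noteq> 0 \<Longrightarrow> ev1 j c \<noteq> zero_mono"
  by (metis ev1_def zero_mono_def)

lemma pmul_ball:
  assumes "fsupp \<gamma>"
  shows "pmul (ball_poly n R) Q \<gamma> = R * Q \<gamma> - (\<Sum>j<n. if 2 \<le> \<gamma> j then Q (\<lambda>i. \<gamma> i - ev1 j 2 i) else 0)"
proof -
  let ?S = "insert zero_mono ((\<lambda>j. ev1 j 2) ` {..<n})"
  have inj: "inj_on (\<lambda>j. ev1 j 2) {..<n}"
  proof (rule inj_onI)
    fix a b assume "ev1 a 2 = ev1 b 2"
    hence "ev1 a 2 a = ev1 b 2 a" by simp
    thus "a = b" by (simp add: ev1_def split: if_splits)
  qed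
  have nz: "zero_mono \<notin> (\<lambda>j. ev1 j 2) ` {..<n}"
  proof
    assume "zero_mono \<in> (\<lambda>j. ev1 j 2) ` {..<n}"
    then obtain j where "zero_mono = ev1 j 2" by auto
    thus False using ev1_ne_zero[of 2 j] by simp
  qed
  have "pmul (ball_poly n R) Q \<gamma> = (\<Sum>\<alpha>\<in>?S. if (\<forall>i. \<alpha> i \<le> \<gamma> i) then ball_poly n R \<alpha> * Q (\<lambda>i. \<gamma> i - \<alpha> i) else 0)"
    by (rule pmul_fin[OF assms]) (auto dest: ball_supp)
  also have "\<dots> = R * Q \<gamma> + (\<Sum>j<n. if (\<forall>i. ev1 j 2 i \<le> \<gamma> i) then ball_poly n R (ev1 j 2) * Q (\<lambda>i. \<gamma> i - ev1 j 2 i) else 0)"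
  proof -
    have b0: "ball_poly n R zero_mono = R" by (simp add: ball_poly_def)
    have g0: "(\<lambda>i. \<gamma> i - zero_mono i) = \<gamma>" by (simp add: zero_mono_def)
    have b1: "ball_poly n R (\<lambda>_. 0) = R" using b0 by (simp add: zero_mono_def)
    have l0: "\<forall>i. zero_mono i \<le> \<gamma> i" by (simp add: zero_mono_def)
    show ?thesis
      apply (subst sum.insert[OF _ nz])
       apply simp
      apply (subst sum.reindex[OF inj])
      apply (simp add: b1 zero_mono_def)
      done
  qed
  also have "(\<Sum>j<n. if (\<forall>i. ev1 j 2 i \<le> \<gamma> i) then ball_poly n R (ev1 j 2) * Q (\<lambda>i. \<gamma> i - ev1 j 2 i) else 0)
      = (\<Sum>j<n. - (if 2 \<le> \<gamma> j then Q (\<lambda>i. \<gamma> i - ev1 j 2 i) else 0))"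
  proof (rule sum.cong)
    fix j assume j: "j \<in> {..<n}"
    have b: "ball_poly n R (ev1 j 2) = -1" using j ev1_ne_zero[of 2 j] by (auto simp: ball_poly_def ev1_def)
    have "(\<forall>i. ev1 j 2 i \<le> \<gamma> i) \<longleftrightarrow> 2 \<le> \<gamma> j" by (auto simp: ev1_def)
    thus "(if (\<forall>i. ev1 j 2 i \<le> \<gamma> i) then ball_poly n R (ev1 j 2) * Q (\<lambda>i. \<gamma> i - ev1 j 2 i) else 0) =
        - (if 2 \<le> \<gamma> j then Q (\<lambda>i. \<gamma> i - ev1 j 2 i) else 0)" using b by auto
  qed simp
  finally show ?thesis by (simp add: sum_negf)
qed

lemma hdeg_ball: "hdeg n (ball_poly n R) = (if n = 0 then 0 else 1)"
proof (cases "n = 0")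
  case True
  have "pdeg n (ball_poly n R) = 0" using True by (simp add: pdeg_def mdeg_def image_constant_conv)
  thus ?thesis using True by (simp add: hdeg_def)
next
  case False
  let ?S = "{\<alpha>. ball_poly n R \<alpha> \<noteq> 0}"
  have fin: "finite ?S"
    by (rule finite_subset[of _ "insert zero_mono ((\<lambda>j. ev1 j 2) ` {..<n})"]) (auto dest: ball_supp)
  have le: "\<forall>x\<in>mdeg n ` ?S. x \<le> 2"
  proof
    fix x assume "x \<in> mdeg n ` ?S"
    then obtain \<alpha> where "\<alpha> \<in> ?S" "x = mdeg n \<alpha>" by auto
    thus "x \<le> 2" using ball_supp[of n R \<alpha>] by (auto simp: mdeg_ev1 mdeg_zero)
  qed
  have "ev1 0 2 \<in> ?S" using False ev1_ne_zero[of 2 0] by (auto simp: ball_poly_def ev1_def)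
  hence mem: "2 \<in> mdeg n ` ?S" using False by (metis image_eqI mdeg_ev1 neq0_conv)
  have "Max (mdeg n ` ?S) = 2" using fin le mem by (intro Max_eqI) auto
  hence "pdeg n (ball_poly n R) = 2" using mem by (auto simp: pdeg_def)
  thus ?thesis using False by (simp add: hdeg_def)
qed

lemma mdeg_upd: "mdeg n (f(n := x)) = mdeg n f"
  unfolding mdeg_def by (rule sum.cong) auto

lemma mdeg_Suc: "mdeg (Suc n) f = mdeg n f + f n"
  by (simp add: mdeg_def)

lemma split_aux:
  "\<forall>\<gamma> a b. (\<forall>i\<ge>n. \<gamma> i = 0) \<and> mdeg n \<gamma> \<le> a + b \<longrightarrow>
     (\<exists>\<alpha> \<beta>. (\<forall>i\<ge>n. \<alpha> i = 0) \<and> (\<forall>i\<ge>n. \<beta> i = 0) \<and> mdeg n \<alpha> \<le> a \<and> mdeg n \<beta> \<le> b \<and> \<gamma> = (\<lambda>i. \<alpha> i + \<beta> i))"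
proof (induction n)
  case 0
  show ?case
  proof (intro allI impI)
    fix \<gamma> :: mono and a b :: nat assume "(\<forall>i\<ge>0. \<gamma> i = 0) \<and> mdeg 0 \<gamma> \<le> a + b"
    hence "\<gamma> = (\<lambda>i. (\<lambda>_. 0) i + (\<lambda>_. 0) i)" by auto
    thus "\<exists>\<alpha> \<beta>. (\<forall>i\<ge>0. \<alpha> i = 0) \<and> (\<forall>i\<ge>0. \<beta> i = 0) \<and> mdeg 0 \<alpha> \<le> a \<and> mdeg 0 \<beta> \<le> b \<and> \<gamma> = (\<lambda>i. \<alpha> i + \<beta> i)"
      by (intro exI[of _ "\<lambda>_. 0"]) (simp add: mdeg_def)
  qed
next
  case (Suc n)
  show ?case
  proof (intro allI impI)
    fix \<gamma> :: mono and a b :: nat assume H: "(\<forall>i\<ge>Suc n. \<gamma> i = 0) \<and> mdeg (Suc n) \<gamma> \<le> a + b"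
    define t where "t = \<gamma> n"
    define t1 where "t1 = min t a"
    define t2 where "t2 = t - t1"
    define \<gamma>' where "\<gamma>' = \<gamma>(n := 0)"
    have H2: "mdeg (Suc n) \<gamma> \<le> a + b" using H by blast
    have H1: "\<forall>i\<ge>Suc n. \<gamma> i = 0" using H by blast
    have m: "mdeg n \<gamma>' + t \<le> a + b" using H2 by (simp only: \<gamma>'_def mdeg_upd mdeg_Suc t_def)
    have t1a: "t1 \<le> a" by (simp add: t1_def)
    have t12: "t1 + t2 = t" by (simp add: t1_def t2_def)
    have t2b: "t2 \<le> b"
    proof (cases "t \<le> a")
      case True thus ?thesis by (simp add: t1_def t2_def)
    next
      case False thus ?thesis using m by (simp add: t1_def t2_def)
    qed
    have s1: "\<forall>i\<ge>n. \<gamma>' i = 0"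
    proof (intro allI impI)
      fix i assume "n \<le> i"
      thus "\<gamma>' i = 0" using H1 by (cases "i = n") (auto simp: \<gamma>'_def)
    qed
    have s2: "mdeg n \<gamma>' \<le> (a - t1) + (b - t2)" using m t1a t2b t12 by linarith
    have "(\<forall>i\<ge>n. \<gamma>' i = 0) \<and> mdeg n \<gamma>' \<le> (a - t1) + (b - t2)" using s1 s2 by blast
    from Suc.IH[rule_format, OF this] obtain \<alpha> \<beta> where ab: "\<forall>i\<ge>n. \<alpha> i = 0" "\<forall>i\<ge>n. \<beta> i = 0" "mdeg n \<alpha> \<le> a - t1"
      "mdeg n \<beta> \<le> b - t2" "\<gamma>' = (\<lambda>i. \<alpha> i + \<beta> i)" by (elim exE conjE) blast
    show "\<exists>\<alpha> \<beta>. (\<forall>i\<ge>Suc n. \<alpha> i = 0) \<and> (\<forall>i\<ge>Suc n. \<beta> i = 0) \<and> mdeg (Suc n) \<alpha> \<le> a \<and> mdeg (Suc n) \<beta> \<le> b \<and> \<gamma> = (\<lambda>i. \<alpha> i + \<beta> i)"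
    proof (intro exI conjI)
      show "\<forall>i\<ge>Suc n. (\<alpha>(n := t1)) i = 0" using ab(1) by simp
      show "\<forall>i\<ge>Suc n. (\<beta>(n := t2)) i = 0" using ab(2) by simp
      have "mdeg (Suc n) (\<alpha>(n := t1)) = mdeg n \<alpha> + t1" by (simp only: mdeg_Suc mdeg_upd) simp
      thus "mdeg (Suc n) (\<alpha>(n := t1)) \<le> a" using ab(3) t1a by linarith
      have "mdeg (Suc n) (\<beta>(n := t2)) = mdeg n \<beta> + t2" by (simp only: mdeg_Suc mdeg_upd) simp
      thus "mdeg (Suc n) (\<beta>(n := t2)) \<le> b" using ab(4) t2b by linarith
      show "\<gamma> = (\<lambda>i. (\<alpha>(n := t1)) i + (\<beta>(n := t2)) i)"
      proof
        fix i show "\<gamma> i = (\<alpha>(n := t1)) i + (\<beta>(n := t2)) i"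
        proof (cases "i = n")
          case True thus ?thesis using t12 by (simp add: t_def)
        next
          case False
          have "\<gamma>' i = \<alpha> i + \<beta> i" using ab(5) by simp
          thus ?thesis using False by (simp add: \<gamma>'_def)
        qed
      qed
    qed
  qed
qed

lemma split_Nmon: "\<gamma> \<in> Nmon n (a + b) \<Longrightarrow> \<exists>\<alpha>\<in>Nmon n a. \<exists>\<beta>\<in>Nmon n b. \<gamma> = (\<lambda>i. \<alpha> i + \<beta> i)"
  using split_aux[of n] unfolding Nmon_def by blast

lemma sum_if_count:
  fixes c :: real
  assumes "finite A"
  shows "(\<Sum>\<alpha>\<in>A. \<Sum>\<beta>\<in>A. if P \<alpha> \<beta> then c else 0) = real (card {p\<in>A \<times> A. P (fst p) (snd p)}) * c"
proof -
  have "(\<Sum>\<alpha>\<in>A. \<Sum>\<beta>\<in>A. if P \<alpha> \<beta> then c else 0) = (\<Sum>p\<in>A \<times> A. if P (fst p) (snd p) then c else 0)"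
    by (simp add: sum.cartesian_product case_prod_beta)
  also have "\<dots> = (\<Sum>p\<in>{p\<in>A \<times> A. P (fst p) (snd p)}. c)"
    using sum.inter_filter[of "A \<times> A" "\<lambda>_. c" "\<lambda>p. P (fst p) (snd p)"] assms by simp
  also have "\<dots> = real (card {p\<in>A \<times> A. P (fst p) (snd p)}) * c" by simp
  finally show ?thesis .
qed

lemma gram_rep:
  assumes q: "\<And>\<gamma>. q \<gamma> \<noteq> 0 \<Longrightarrow> \<gamma> \<in> Nmon n (2 * k)"
  shows "\<exists>E. (\<forall>\<alpha> \<beta>. E \<alpha> \<beta> = E \<beta> \<alpha>) \<and> gram_poly n k E = q"
proof -
  let ?A = "Nmon n k"
  define cnt where "cnt = (\<lambda>\<gamma>. card {p\<in>?A \<times> ?A. (\<lambda>i. fst p i + snd p i) = \<gamma>})"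
  define E where "E = (\<lambda>\<alpha> \<beta>. q (\<lambda>i. \<alpha> i + \<beta> i) / real (cnt (\<lambda>i. \<alpha> i + \<beta> i)))"
  have sym: "\<forall>\<alpha> \<beta>. E \<alpha> \<beta> = E \<beta> \<alpha>" unfolding E_def by (simp add: add.commute)
  have "gram_poly n k E \<gamma> = q \<gamma>" for \<gamma>
  proof -
    have "gram_poly n k E \<gamma> = (\<Sum>\<alpha>\<in>?A. \<Sum>\<beta>\<in>?A. if (\<lambda>i. \<alpha> i + \<beta> i) = \<gamma> then q \<gamma> / real (cnt \<gamma>) else 0)"
      unfolding gram_poly_def E_def by (intro sum.cong refl) simp
    also have "\<dots> = real (cnt \<gamma>) * (q \<gamma> / real (cnt \<gamma>))"
      unfolding cnt_def by (rule sum_if_count[OF fin_Nmon])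
    also have "\<dots> = q \<gamma>"
    proof (cases "q \<gamma> = 0")
      case False
      have "\<gamma> \<in> Nmon n (k + k)" using q[OF False] by (simp add: mult_2)
      then obtain \<alpha> \<beta> where "\<alpha> \<in> ?A" "\<beta> \<in> ?A" "\<gamma> = (\<lambda>i. \<alpha> i + \<beta> i)" using split_Nmon by blast
      hence "(\<alpha>, \<beta>) \<in> {p\<in>?A \<times> ?A. (\<lambda>i. fst p i + snd p i) = \<gamma>}" by auto
      moreover have "finite {p\<in>?A \<times> ?A. (\<lambda>i. fst p i + snd p i) = \<gamma>}" using fin_Nmon by auto
      ultimately have "cnt \<gamma> > 0" unfolding cnt_def using card_gt_0_iff by blast
      thus ?thesis by simp
    qed simp
    finally show ?thesis .
  qed
  thus ?thesis using sym by blast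
qed

lemma ev1_Nmon: assumes j: "j < n" shows "ev1 j 1 \<in> Nmon n 1"
proof -
  have "mdeg n (ev1 j 1) = 1" using mdeg_ev1[OF j] .
  moreover have "\<forall>i\<ge>n. ev1 j 1 i = 0" using j by (simp add: ev1_def)
  ultimately show ?thesis by (simp add: Nmon_def)
qed

lemma double_zero: "((\<lambda>i. \<beta> i + \<beta> i) = zero_mono) \<longleftrightarrow> \<beta> = zero_mono"
  by (auto simp: zero_mono_def fun_eq_iff)

lemma ball_identity:
  fixes n k :: nat and R c :: real and e :: "mono \<Rightarrow> real"
  assumes hk: "hdeg n (ball_poly n R) \<le> k"
  defines "e' \<equiv> (\<lambda>\<beta>. if \<beta> \<in> Nmon n (k - hdeg n (ball_poly n R)) then e \<beta> else 0)"
  defines "a \<equiv> (\<lambda>\<beta>. c * (if \<beta> = zero_mono then 1 else 0) - R * e' \<beta> +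
              (\<Sum>j<n. if 1 \<le> \<beta> j then e' (\<lambda>i. \<beta> i - ev1 j 1 i) else 0))"
  shows "gram_poly n k (diagm a) \<gamma> + pmul (ball_poly n R) (gram_poly n (k - hdeg n (ball_poly n R)) (diagm e)) \<gamma> = pconst c \<gamma>"
proof -
  define h0 where "h0 = hdeg n (ball_poly n R)"
  define gE where "gE = gram_poly n (k - h0) (diagm e)"
  have gEd: "gE (\<lambda>i. \<beta> i + \<beta> i) = e' \<beta>" for \<beta>
    unfolding gE_def e'_def h0_def by (rule gram_diag_double)
  have zdbl: "zero_mono = (\<lambda>i. zero_mono i + zero_mono i)" by (simp add: zero_mono_def)
  show ?thesis unfolding h0_def[symmetric] gE_def[symmetric]
  proof (cases "fsupp \<gamma>")
    case False
    have p0: "pmul (ball_poly n R) gE \<gamma> = 0" by (rule pmul_infinite[OF False])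
    have g0: "gram_poly n k (diagm a) \<gamma> = 0"
    proof (rule gram_diag_nd)
      fix \<beta> assume "\<beta> \<in> Nmon n k"
      hence "fsupp (\<lambda>i. \<beta> i + \<beta> i)" using Nmon_add Nmon_fsupp by blast
      thus "\<gamma> \<noteq> (\<lambda>i. \<beta> i + \<beta> i)" using False by auto
    qed
    have "\<gamma> \<noteq> zero_mono" using False Nmon_fsupp[OF zero_in_Nmon] by auto
    thus "gram_poly n k (diagm a) \<gamma> + pmul (ball_poly n R) gE \<gamma> = pconst c \<gamma>"
      using p0 g0 by (simp add: pconst_def)
  next
    case fs: True
    have pm: "pmul (ball_poly n R) gE \<gamma> = R * gE \<gamma> - (\<Sum>j<n. if 2 \<le> \<gamma> j then gE (\<lambda>i. \<gamma> i - ev1 j 2 i) else 0)"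
      by (rule pmul_ball[OF fs])
    show "gram_poly n k (diagm a) \<gamma> + pmul (ball_poly n R) gE \<gamma> = pconst c \<gamma>"
    proof (cases "\<exists>\<beta>\<in>Nmon n k. \<gamma> = (\<lambda>i. \<beta> i + \<beta> i)")
      case True
      then obtain \<beta> where b: "\<beta> \<in> Nmon n k" and g: "\<gamma> = (\<lambda>i. \<beta> i + \<beta> i)" by blast
      have ga: "gram_poly n k (diagm a) \<gamma> = a \<beta>" unfolding g gram_diag_double using b by simp
      have terms: "(if 2 \<le> \<gamma> j then gE (\<lambda>i. \<gamma> i - ev1 j 2 i) else 0) = (if 1 \<le> \<beta> j then e' (\<lambda>i. \<beta> i - ev1 j 1 i) else 0)" for j
      proof (cases "1 \<le> \<beta> j")
        case True
        have "(\<lambda>i. \<gamma> i - ev1 j 2 i) = (\<lambda>i. (\<lambda>i. \<beta> i - ev1 j 1 i) i + (\<lambda>i. \<beta> i - ev1 j 1 i) i)"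
          using True by (auto simp: g ev1_def fun_eq_iff)
        thus ?thesis using True gEd by (simp add: g)
      next
        case False thus ?thesis by (simp add: g)
      qed
      have pc: "pconst c \<gamma> = c * (if \<beta> = zero_mono then 1 else 0)"
        unfolding g pconst_def double_zero by simp
      show ?thesis unfolding ga pm terms pc using gEd[of \<beta>] by (simp add: a_def g)
    next
      case False
      have g0: "gram_poly n k (diagm a) \<gamma> = 0" by (rule gram_diag_nd) (use False in blast)
      have e0: "gE \<gamma> = 0" unfolding gE_def
        by (rule gram_diag_nd) (use False Nmon_mono[of "k - h0" k] in auto)
      have t0: "(if 2 \<le> \<gamma> j then gE (\<lambda>i. \<gamma> i - ev1 j 2 i) else 0) = 0" if j: "j \<in> {..<n}" for j
      proof (cases "2 \<le> \<gamma> j")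
        case True
        have h1: "h0 = 1" using j hdeg_ball[of n R] by (simp add: h0_def)
        have "gE (\<lambda>i. \<gamma> i - ev1 j 2 i) = 0" unfolding gE_def
        proof (rule gram_diag_nd)
          fix \<beta>' assume b': "\<beta>' \<in> Nmon n (k - h0)"
          show "(\<lambda>i. \<gamma> i - ev1 j 2 i) \<noteq> (\<lambda>i. \<beta>' i + \<beta>' i)"
          proof
            assume eq: "(\<lambda>i. \<gamma> i - ev1 j 2 i) = (\<lambda>i. \<beta>' i + \<beta>' i)"
            define \<beta> where "\<beta> = (\<lambda>i. \<beta>' i + ev1 j 1 i)"
            have "\<beta> \<in> Nmon n (k - h0 + 1)" unfolding \<beta>_def using Nmon_add[OF b' ev1_Nmon] j by simp
            hence bN: "\<beta> \<in> Nmon n k" using h1 hk h0_def by simp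
            have "\<gamma> = (\<lambda>i. \<beta> i + \<beta> i)"
            proof
              fix i
              have "\<gamma> i - ev1 j 2 i = \<beta>' i + \<beta>' i" using fun_cong[OF eq, of i] by simp
              thus "\<gamma> i = \<beta> i + \<beta> i" using True by (auto simp: \<beta>_def ev1_def split: if_splits)
            qed
            thus False using False bN by blast
          qed
        qed
        thus ?thesis by simp
      qed simp
      have "(\<Sum>j<n. if 2 \<le> \<gamma> j then gE (\<lambda>i. \<gamma> i - ev1 j 2 i) else 0) = 0"
        using t0 by (rule sum.neutral[OF ballI])
      moreover have "pconst c \<gamma> = 0"
      proof -
        have "\<gamma> \<noteq> zero_mono" using False zdbl zero_in_Nmon by blast
        thus ?thesis by (simp add: pconst_def)
      qed
      ultimately show ?thesis unfolding pm g0 e0 by simp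
    qed
  qed
qed


lemma hdeg_ball_le: "hdeg n (ball_poly n R) \<le> 1"
  using hdeg_ball[of n R] by simp

lemma ball_a_pos:
  fixes n k :: nat and R c :: real
  assumes R: "R > 0" and c: "c > 0" and hk: "hdeg n (ball_poly n R) \<le> k" and b: "\<beta> \<in> Nmon n k"
  defines "e \<equiv> (\<lambda>\<beta>. (c / (2 * R)) * (1 / (2 * R)) ^ mdeg n \<beta>)"
  defines "e' \<equiv> (\<lambda>\<beta>. if \<beta> \<in> Nmon n (k - hdeg n (ball_poly n R)) then e \<beta> else 0)"
  defines "a \<equiv> (\<lambda>\<beta>. c * (if \<beta> = zero_mono then 1 else 0) - R * e' \<beta> +
              (\<Sum>j<n. if 1 \<le> \<beta> j then e' (\<lambda>i. \<beta> i - ev1 j 1 i) else 0))"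
  shows "a \<beta> > 0"
proof -
  define s where "s = c / (2 * R)"
  define l where "l = 1 / (2 * R)"
  have s: "s > 0" and l: "l > 0" using R c by (auto simp: s_def l_def)
  have Rl: "R * l = 1 / 2" using R by (simp add: l_def)
  have Rs: "R * s = c / 2" using R by (simp add: s_def)
  have e'0: "e' x \<ge> 0" for x using s l by (simp add: e'_def e_def s_def[symmetric] l_def[symmetric])
  have e'le: "e' x \<le> s * l ^ mdeg n x" for x using s l by (simp add: e'_def e_def s_def[symmetric] l_def[symmetric])
  show ?thesis
  proof (cases "\<beta> = zero_mono")
    case True
    have "e' zero_mono = s" by (simp add: e'_def e_def s_def)
    moreover have "(\<Sum>j<n. if 1 \<le> zero_mono j then e' (\<lambda>i. zero_mono i - ev1 j 1 i) else 0) = 0"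
      by (simp add: zero_mono_def)
    ultimately have "a \<beta> = c - R * s" using True by (simp add: a_def)
    thus ?thesis using Rs c by simp
  next
    case False
    obtain j where j: "j < n" "1 \<le> \<beta> j"
    proof -
      have "\<exists>j<n. \<beta> j \<noteq> 0"
      proof (rule ccontr)
        assume "\<not> (\<exists>j<n. \<beta> j \<noteq> 0)"
        hence "\<beta> = zero_mono" using b by (auto simp: Nmon_def zero_mono_def fun_eq_iff not_less[symmetric])
        thus False using False by simp
      qed
      thus ?thesis using that by (auto simp: Suc_le_eq)
    qed
    define \<beta>' where "\<beta>' = (\<lambda>i. \<beta> i - ev1 j 1 i)"
    have bsplit: "\<beta> = (\<lambda>i. \<beta>' i + ev1 j 1 i)" using j by (auto simp: \<beta>'_def ev1_def fun_eq_iff)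
    define m where "m = mdeg n \<beta>"
    have mb': "mdeg n \<beta>' + 1 = m" unfolding m_def by (subst bsplit) (simp only: mdeg_add mdeg_ev1[OF j(1)])
    have mk: "m \<le> k" using b by (simp add: Nmon_def m_def)
    have b'N: "\<beta>' \<in> Nmon n (k - hdeg n (ball_poly n R))"
    proof -
      have "\<forall>i\<ge>n. \<beta>' i = 0" using b by (simp add: Nmon_def \<beta>'_def)
      moreover have "mdeg n \<beta>' \<le> k - hdeg n (ball_poly n R)" using mb' mk hdeg_ball_le[of n R] by linarith
      ultimately show ?thesis by (simp add: Nmon_def)
    qed
    have e'b': "e' \<beta>' = s * l ^ (m - 1)"
    proof -
      have md: "mdeg n \<beta>' = m - 1" using mb' by linarith
      show ?thesis by (simp add: e'_def e_def s_def l_def b'N md)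
    qed
    have "e' \<beta>' = (if 1 \<le> \<beta> j then e' (\<lambda>i. \<beta> i - ev1 j 1 i) else 0)" using j by (simp add: \<beta>'_def)
    also have "\<dots> \<le> (\<Sum>j<n. if 1 \<le> \<beta> j then e' (\<lambda>i. \<beta> i - ev1 j 1 i) else 0)"
      by (rule member_le_sum) (use j e'0 in auto)
    finally have S: "s * l ^ (m - 1) \<le> (\<Sum>j<n. if 1 \<le> \<beta> j then e' (\<lambda>i. \<beta> i - ev1 j 1 i) else 0)"
      using e'b' by simp
    have "R * e' \<beta> \<le> R * (s * l ^ m)" using e'le[of \<beta>] R by (simp add: m_def)
    also have "\<dots> = (R * l) * (s * l ^ (m - 1))" using mb' by (metis (no_types) add_diff_cancel_right' mult.assoc mult.left_commute power_Suc Suc_eq_plus1)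
    also have "\<dots> = (s * l ^ (m - 1)) / 2" using Rl by simp
    finally have T: "R * e' \<beta> \<le> (s * l ^ (m - 1)) / 2" .
    have pos: "s * l ^ (m - 1) > 0" using s l by simp
    have "a \<beta> = - R * e' \<beta> + (\<Sum>j<n. if 1 \<le> \<beta> j then e' (\<lambda>i. \<beta> i - ev1 j 1 i) else 0)"
      using False by (simp add: a_def)
    thus ?thesis using S T pos by linarith
  qed
qed

lemma trace_H: "trace_XMX n d X M = (\<Sum>\<beta>\<in>Nmon n d. \<Sum>\<gamma>\<in>Nmon n d. M \<beta> \<gamma> * (\<Sum>\<alpha>\<in>Nmon n d. X \<gamma> \<alpha> * X \<alpha> \<beta>))"
proof -
  let ?A = "Nmon n d"
  have "trace_XMX n d X M = (\<Sum>\<alpha>\<in>?A. \<Sum>\<beta>\<in>?A. \<Sum>\<gamma>\<in>?A. X \<alpha> \<beta> * M \<beta> \<gamma> * X \<gamma> \<alpha>)"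
    by (simp add: trace_XMX_def)
  also have "\<dots> = (\<Sum>\<beta>\<in>?A. \<Sum>\<alpha>\<in>?A. \<Sum>\<gamma>\<in>?A. X \<alpha> \<beta> * M \<beta> \<gamma> * X \<gamma> \<alpha>)" by (rule sum.swap)
  also have "\<dots> = (\<Sum>\<beta>\<in>?A. \<Sum>\<gamma>\<in>?A. \<Sum>\<alpha>\<in>?A. X \<alpha> \<beta> * M \<beta> \<gamma> * X \<gamma> \<alpha>)"
    by (rule sum.cong[OF refl], rule sum.swap)
  also have "\<dots> = (\<Sum>\<beta>\<in>?A. \<Sum>\<gamma>\<in>?A. M \<beta> \<gamma> * (\<Sum>\<alpha>\<in>?A. X \<gamma> \<alpha> * X \<alpha> \<beta>))"
    by (intro sum.cong refl) (simp add: sum_distrib_left mult_ac)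
  finally show ?thesis .
qed

lemma sum_delta_F: "finite F \<Longrightarrow> (\<Sum>\<epsilon>\<in>F. if \<epsilon> = x then f \<epsilon> else (0::real)) = (if x \<in> F then f x else 0)"
  by (simp add: sum.delta)

lemma Ly_mom:
  assumes F: "finite F" and sub: "\<forall>\<alpha>\<in>Nmon n d. \<forall>\<beta>\<in>Nmon n d. (\<lambda>i. \<alpha> i + \<beta> i) \<in> F"
  shows "(\<Sum>\<beta>\<in>Nmon n d. \<Sum>\<gamma>\<in>Nmon n d. mom_mat y \<beta> \<gamma> * G \<gamma> \<beta>) = (\<Sum>\<epsilon>\<in>F. gram_poly n d G \<epsilon> * y \<epsilon>)"
proof -
  let ?A = "Nmon n d"
  have "(\<Sum>\<epsilon>\<in>F. gram_poly n d G \<epsilon> * y \<epsilon>) = (\<Sum>\<epsilon>\<in>F. \<Sum>\<alpha>\<in>?A. \<Sum>\<beta>\<in>?A. if \<epsilon> = (\<lambda>i. \<alpha> i + \<beta> i) then G \<alpha> \<beta> * y \<epsilon> else 0)"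
    unfolding gram_poly_def sum_distrib_right by (intro sum.cong refl) auto
  also have "\<dots> = (\<Sum>\<alpha>\<in>?A. \<Sum>\<epsilon>\<in>F. \<Sum>\<beta>\<in>?A. if \<epsilon> = (\<lambda>i. \<alpha> i + \<beta> i) then G \<alpha> \<beta> * y \<epsilon> else 0)" by (rule sum.swap)
  also have "\<dots> = (\<Sum>\<alpha>\<in>?A. \<Sum>\<beta>\<in>?A. \<Sum>\<epsilon>\<in>F. if \<epsilon> = (\<lambda>i. \<alpha> i + \<beta> i) then G \<alpha> \<beta> * y \<epsilon> else 0)"
    by (rule sum.cong[OF refl], rule sum.swap)
  also have "\<dots> = (\<Sum>\<alpha>\<in>?A. \<Sum>\<beta>\<in>?A. G \<alpha> \<beta> * y (\<lambda>i. \<alpha> i + \<beta> i))"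
    by (intro sum.cong refl) (use F sub in \<open>simp add: sum.delta\<close>)
  also have "\<dots> = (\<Sum>\<beta>\<in>?A. \<Sum>\<alpha>\<in>?A. G \<alpha> \<beta> * y (\<lambda>i. \<alpha> i + \<beta> i))" by (rule sum.swap)
  also have "\<dots> = (\<Sum>\<beta>\<in>?A. \<Sum>\<gamma>\<in>?A. mom_mat y \<beta> \<gamma> * G \<gamma> \<beta>)"
    by (intro sum.cong refl) (simp add: mom_mat_def add.commute mult.commute)
  finally show ?thesis by simp
qed

lemma le_split_iff: "((\<forall>i. \<delta> i \<le> \<epsilon> i) \<and> (\<lambda>i. \<alpha> i + \<beta> i) = (\<lambda>i. \<epsilon> i - \<delta> i)) \<longleftrightarrow> \<epsilon> = (\<lambda>i. \<delta> i + \<alpha> i + (\<beta> i::nat))"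
proof
  assume H: "(\<forall>i. \<delta> i \<le> \<epsilon> i) \<and> (\<lambda>i. \<alpha> i + \<beta> i) = (\<lambda>i. \<epsilon> i - \<delta> i)"
  show "\<epsilon> = (\<lambda>i. \<delta> i + \<alpha> i + \<beta> i)"
  proof
    fix i show "\<epsilon> i = \<delta> i + \<alpha> i + \<beta> i" using conjunct1[OF H, rule_format, of i] fun_cong[OF conjunct2[OF H], of i] by arith
  qed
next
  assume "\<epsilon> = (\<lambda>i. \<delta> i + \<alpha> i + \<beta> i)"
  thus "(\<forall>i. \<delta> i \<le> \<epsilon> i) \<and> (\<lambda>i. \<alpha> i + \<beta> i) = (\<lambda>i. \<epsilon> i - \<delta> i)" by auto
qed

lemma Ly_loc:
  assumes g: "is_poly n g" and F: "finite F" and fsF: "\<forall>\<epsilon>\<in>F. fsupp \<epsilon>"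
    and sub: "\<forall>\<delta>. g \<delta> \<noteq> 0 \<longrightarrow> (\<forall>\<alpha>\<in>Nmon n d. \<forall>\<beta>\<in>Nmon n d. (\<lambda>i. \<delta> i + \<alpha> i + \<beta> i) \<in> F)"
  shows "(\<Sum>\<beta>\<in>Nmon n d. \<Sum>\<gamma>\<in>Nmon n d. loc_mat n g y \<beta> \<gamma> * G \<gamma> \<beta>) = (\<Sum>\<epsilon>\<in>F. pmul g (gram_poly n d G) \<epsilon> * y \<epsilon>)"
proof -
  let ?A = "Nmon n d"
  let ?S = "{\<delta>. g \<delta> \<noteq> 0}"
  have fS: "finite ?S" by (rule is_poly_supp(1)[OF g])
  have tm: "(if (\<forall>i. \<delta> i \<le> \<epsilon> i) then g \<delta> * gram_poly n d G (\<lambda>i. \<epsilon> i - \<delta> i) else 0) * y \<epsilon> =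
     (\<Sum>\<alpha>\<in>?A. \<Sum>\<beta>\<in>?A. if \<epsilon> = (\<lambda>i. \<delta> i + \<alpha> i + \<beta> i) then g \<delta> * G \<alpha> \<beta> * y \<epsilon> else 0)" for \<delta> \<epsilon>
  proof (cases "\<forall>i. \<delta> i \<le> \<epsilon> i")
    case True
    have "(\<Sum>\<alpha>\<in>?A. \<Sum>\<beta>\<in>?A. if \<epsilon> = (\<lambda>i. \<delta> i + \<alpha> i + \<beta> i) then g \<delta> * G \<alpha> \<beta> * y \<epsilon> else 0)
        = (\<Sum>\<alpha>\<in>?A. \<Sum>\<beta>\<in>?A. g \<delta> * ((if (\<lambda>i. \<alpha> i + \<beta> i) = (\<lambda>i. \<epsilon> i - \<delta> i) then G \<alpha> \<beta> else 0)) * y \<epsilon>)"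
      by (intro sum.cong refl) (use True le_split_iff[of \<delta> \<epsilon> ] in auto)
    thus ?thesis using True by (simp add: gram_poly_def sum_distrib_left sum_distrib_right)
  next
    case False
    have "(\<Sum>\<alpha>\<in>?A. \<Sum>\<beta>\<in>?A. if \<epsilon> = (\<lambda>i. \<delta> i + \<alpha> i + \<beta> i) then g \<delta> * G \<alpha> \<beta> * y \<epsilon> else 0) = 0"
      by (intro sum.neutral ballI) (use False in auto)
    moreover have "(if (\<forall>i. \<delta> i \<le> \<epsilon> i) then g \<delta> * gram_poly n d G (\<lambda>i. \<epsilon> i - \<delta> i) else 0) = 0"
      using False by (rule if_not_P)
    ultimately show ?thesis by simp
  qed
  have "(\<Sum>\<epsilon>\<in>F. pmul g (gram_poly n d G) \<epsilon> * y \<epsilon>) =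
     (\<Sum>\<epsilon>\<in>F. \<Sum>\<delta>\<in>?S. (if (\<forall>i. \<delta> i \<le> \<epsilon> i) then g \<delta> * gram_poly n d G (\<lambda>i. \<epsilon> i - \<delta> i) else 0) * y \<epsilon>)"
  proof (intro sum.cong refl)
    fix \<epsilon> assume "\<epsilon> \<in> F"
    hence "fsupp \<epsilon>" using fsF by blast
    thus "pmul g (gram_poly n d G) \<epsilon> * y \<epsilon> = (\<Sum>\<delta>\<in>?S. (if (\<forall>i. \<delta> i \<le> \<epsilon> i) then g \<delta> * gram_poly n d G (\<lambda>i. \<epsilon> i - \<delta> i) else 0) * y \<epsilon>)"
      by (subst pmul_fin[OF _ fS]) (auto simp: sum_distrib_right)
  qed
  also have "\<dots> = (\<Sum>\<epsilon>\<in>F. \<Sum>\<delta>\<in>?S. \<Sum>\<alpha>\<in>?A. \<Sum>\<beta>\<in>?A. if \<epsilon> = (\<lambda>i. \<delta> i + \<alpha> i + \<beta> i) then g \<delta> * G \<alpha> \<beta> * y \<epsilon> else 0)"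
    by (simp only: tm)
  also have "\<dots> = (\<Sum>\<delta>\<in>?S. \<Sum>\<epsilon>\<in>F. \<Sum>\<alpha>\<in>?A. \<Sum>\<beta>\<in>?A. if \<epsilon> = (\<lambda>i. \<delta> i + \<alpha> i + \<beta> i) then g \<delta> * G \<alpha> \<beta> * y \<epsilon> else 0)"
    by (rule sum.swap)
  also have "\<dots> = (\<Sum>\<delta>\<in>?S. \<Sum>\<alpha>\<in>?A. \<Sum>\<epsilon>\<in>F. \<Sum>\<beta>\<in>?A. if \<epsilon> = (\<lambda>i. \<delta> i + \<alpha> i + \<beta> i) then g \<delta> * G \<alpha> \<beta> * y \<epsilon> else 0)"
    by (rule sum.cong[OF refl], rule sum.swap)
  also have "\<dots> = (\<Sum>\<delta>\<in>?S. \<Sum>\<alpha>\<in>?A. \<Sum>\<beta>\<in>?A. \<Sum>\<epsilon>\<in>F. if \<epsilon> = (\<lambda>i. \<delta> i + \<alpha> i + \<beta> i) then g \<delta> * G \<alpha> \<beta> * y \<epsilon> else 0)"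
    by (rule sum.cong[OF refl], rule sum.cong[OF refl], rule sum.swap)
  also have "\<dots> = (\<Sum>\<delta>\<in>?S. \<Sum>\<alpha>\<in>?A. \<Sum>\<beta>\<in>?A. g \<delta> * G \<alpha> \<beta> * y (\<lambda>i. \<delta> i + \<alpha> i + \<beta> i))"
  proof (intro sum.cong refl)
    fix \<delta> \<alpha> \<beta> assume "\<delta> \<in> ?S" "\<alpha> \<in> ?A" "\<beta> \<in> ?A"
    hence "(\<lambda>i. \<delta> i + \<alpha> i + \<beta> i) \<in> F" using sub by blast
    thus "(\<Sum>\<epsilon>\<in>F. if \<epsilon> = (\<lambda>i. \<delta> i + \<alpha> i + \<beta> i) then g \<delta> * G \<alpha> \<beta> * y \<epsilon> else 0) = g \<delta> * G \<alpha> \<beta> * y (\<lambda>i. \<delta> i + \<alpha> i + \<beta> i)"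
      using F by (simp add: sum.delta)
  qed
  also have "\<dots> = (\<Sum>\<beta>\<in>?A. \<Sum>\<gamma>\<in>?A. loc_mat n g y \<beta> \<gamma> * G \<gamma> \<beta>)"
  proof -
    have "(\<Sum>\<beta>\<in>?A. \<Sum>\<gamma>\<in>?A. loc_mat n g y \<beta> \<gamma> * G \<gamma> \<beta>) = (\<Sum>\<beta>\<in>?A. \<Sum>\<gamma>\<in>?A. \<Sum>\<delta>\<in>?S. g \<delta> * G \<gamma> \<beta> * y (\<lambda>i. \<delta> i + \<gamma> i + \<beta> i))"
      unfolding loc_mat_def by (intro sum.cong refl) (simp add: sum_distrib_right sum_distrib_left add_ac mult_ac)
    also have "\<dots> = (\<Sum>\<gamma>\<in>?A. \<Sum>\<beta>\<in>?A. \<Sum>\<delta>\<in>?S. g \<delta> * G \<gamma> \<beta> * y (\<lambda>i. \<delta> i + \<gamma> i + \<beta> i))" by (rule sum.swap)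
    also have "\<dots> = (\<Sum>\<gamma>\<in>?A. \<Sum>\<delta>\<in>?S. \<Sum>\<beta>\<in>?A. g \<delta> * G \<gamma> \<beta> * y (\<lambda>i. \<delta> i + \<gamma> i + \<beta> i))"
      by (rule sum.cong[OF refl], rule sum.swap)
    also have "\<dots> = (\<Sum>\<delta>\<in>?S. \<Sum>\<gamma>\<in>?A. \<Sum>\<beta>\<in>?A. g \<delta> * G \<gamma> \<beta> * y (\<lambda>i. \<delta> i + \<gamma> i + \<beta> i))" by (rule sum.swap)
    finally show ?thesis by simp
  qed
  finally show ?thesis by simp
qed

lemma cs_bound:
  fixes u :: "'a \<Rightarrow> real"
  assumes "finite A"
  shows "(\<Sum>\<alpha>\<in>A. \<Sum>\<beta>\<in>A. \<bar>u \<alpha>\<bar> * \<bar>u \<beta>\<bar>) \<le> real (card A) * (\<Sum>\<alpha>\<in>A. (u \<alpha>)\<^sup>2)"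
proof -
  have "(\<Sum>\<alpha>\<in>A. \<Sum>\<beta>\<in>A. \<bar>u \<alpha>\<bar> * \<bar>u \<beta>\<bar>) \<le> (\<Sum>\<alpha>\<in>A. \<Sum>\<beta>\<in>A. ((u \<alpha>)\<^sup>2 + (u \<beta>)\<^sup>2) / 2)"
  proof (intro sum_mono)
    fix a b
    have "0 \<le> (\<bar>u a\<bar> - \<bar>u b\<bar>)\<^sup>2" by simp
    thus "\<bar>u a\<bar> * \<bar>u b\<bar> \<le> ((u a)\<^sup>2 + (u b)\<^sup>2) / 2" by (simp add: power2_eq_square algebra_simps)
  qed
  also have "\<dots> = (\<Sum>\<alpha>\<in>A. (real (card A) * (u \<alpha>)\<^sup>2 + (\<Sum>\<beta>\<in>A. (u \<beta>)\<^sup>2)) / 2)"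
    by (simp add: sum.distrib sum_divide_distrib[symmetric])
  also have "\<dots> = real (card A) * (\<Sum>\<alpha>\<in>A. (u \<alpha>)\<^sup>2)"
    by (simp add: sum.distrib sum_divide_distrib[symmetric] sum_distrib_left[symmetric])
  finally show ?thesis .
qed

lemma pd_dom:
  fixes G :: "'a \<Rightarrow> 'a \<Rightarrow> real"
  assumes fin: "finite A" and dd: "\<forall>\<alpha>\<in>A. dd \<alpha> \<ge> \<delta>"
    and W: "\<forall>\<alpha>\<in>A. \<forall>\<beta>\<in>A. \<bar>G \<alpha> \<beta> - (if \<alpha> = \<beta> then dd \<alpha> else 0)\<bar> \<le> r"
    and rN: "r * real (card A) < \<delta>"
    and u: "\<exists>\<alpha>\<in>A. u \<alpha> \<noteq> 0"
  shows "(\<Sum>\<alpha>\<in>A. \<Sum>\<beta>\<in>A. u \<alpha> * G \<alpha> \<beta> * u \<beta>) > 0"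
proof -
  define W' where "W' = (\<lambda>\<alpha> \<beta>. G \<alpha> \<beta> - (if \<alpha> = \<beta> then dd \<alpha> else 0))"
  have r0: "r \<ge> 0" using W u by (metis abs_ge_zero order_trans)
  have S0: "(\<Sum>\<alpha>\<in>A. (u \<alpha>)\<^sup>2) > 0"
  proof -
    obtain a where a: "a \<in> A" "u a \<noteq> 0" using u by blast
    have "(u a)\<^sup>2 \<le> (\<Sum>\<alpha>\<in>A. (u \<alpha>)\<^sup>2)" by (rule member_le_sum) (use a fin in auto)
    moreover have "(u a)\<^sup>2 > 0" using a by simp
    ultimately show ?thesis by linarith
  qed
  have split: "(\<Sum>\<alpha>\<in>A. \<Sum>\<beta>\<in>A. u \<alpha> * G \<alpha> \<beta> * u \<beta>) =
      (\<Sum>\<alpha>\<in>A. dd \<alpha> * (u \<alpha>)\<^sup>2) + (\<Sum>\<alpha>\<in>A. \<Sum>\<beta>\<in>A. u \<alpha> * W' \<alpha> \<beta> * u \<beta>)"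
  proof -
    have "(\<Sum>\<alpha>\<in>A. \<Sum>\<beta>\<in>A. u \<alpha> * G \<alpha> \<beta> * u \<beta>) =
      (\<Sum>\<alpha>\<in>A. \<Sum>\<beta>\<in>A. (if \<beta> = \<alpha> then dd \<alpha> * (u \<alpha>)\<^sup>2 else 0) + u \<alpha> * W' \<alpha> \<beta> * u \<beta>)"
      by (intro sum.cong refl) (auto simp: W'_def power2_eq_square algebra_simps)
    also have "\<dots> = (\<Sum>\<alpha>\<in>A. dd \<alpha> * (u \<alpha>)\<^sup>2) + (\<Sum>\<alpha>\<in>A. \<Sum>\<beta>\<in>A. u \<alpha> * W' \<alpha> \<beta> * u \<beta>)"
      using fin by (simp add: sum.distrib)
    finally show ?thesis .
  qed
  have "(\<Sum>\<alpha>\<in>A. dd \<alpha> * (u \<alpha>)\<^sup>2) \<ge> (\<Sum>\<alpha>\<in>A. \<delta> * (u \<alpha>)\<^sup>2)"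
    using dd by (intro sum_mono mult_right_mono) auto
  hence s1: "(\<Sum>\<alpha>\<in>A. dd \<alpha> * (u \<alpha>)\<^sup>2) \<ge> \<delta> * (\<Sum>\<alpha>\<in>A. (u \<alpha>)\<^sup>2)" by (simp add: sum_distrib_left)
  have "-(\<Sum>\<alpha>\<in>A. \<Sum>\<beta>\<in>A. u \<alpha> * W' \<alpha> \<beta> * u \<beta>) \<le> (\<Sum>\<alpha>\<in>A. \<Sum>\<beta>\<in>A. r * (\<bar>u \<alpha>\<bar> * \<bar>u \<beta>\<bar>))"
  proof -
    have "-(\<Sum>\<alpha>\<in>A. \<Sum>\<beta>\<in>A. u \<alpha> * W' \<alpha> \<beta> * u \<beta>) = (\<Sum>\<alpha>\<in>A. \<Sum>\<beta>\<in>A. -(u \<alpha> * W' \<alpha> \<beta> * u \<beta>))"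
      by (simp add: sum_negf)
    also have "\<dots> \<le> (\<Sum>\<alpha>\<in>A. \<Sum>\<beta>\<in>A. r * (\<bar>u \<alpha>\<bar> * \<bar>u \<beta>\<bar>))"
    proof (intro sum_mono)
      fix a b assume a: "a \<in> A" and b: "b \<in> A"
      have "\<bar>W' a b\<bar> \<le> r" using W a b by (simp add: W'_def)
      have e: "\<bar>u a * W' a b * u b\<bar> = (\<bar>u a\<bar> * \<bar>u b\<bar>) * \<bar>W' a b\<bar>" by (simp add: abs_mult algebra_simps)
      have "(\<bar>u a\<bar> * \<bar>u b\<bar>) * \<bar>W' a b\<bar> \<le> (\<bar>u a\<bar> * \<bar>u b\<bar>) * r"
        by (rule mult_left_mono) (use \<open>\<bar>W' a b\<bar> \<le> r\<close> in auto)
      hence "\<bar>u a * W' a b * u b\<bar> \<le> r * (\<bar>u a\<bar> * \<bar>u b\<bar>)" using e by (simp add: mult.commute)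
      thus "-(u a * W' a b * u b) \<le> r * (\<bar>u a\<bar> * \<bar>u b\<bar>)" by linarith
    qed
    finally show ?thesis .
  qed
  also have "\<dots> = r * (\<Sum>\<alpha>\<in>A. \<Sum>\<beta>\<in>A. \<bar>u \<alpha>\<bar> * \<bar>u \<beta>\<bar>)" by (simp add: sum_distrib_left)
  also have "\<dots> \<le> r * (real (card A) * (\<Sum>\<alpha>\<in>A. (u \<alpha>)\<^sup>2))"
    by (rule mult_left_mono[OF cs_bound[OF fin] r0])
  finally have s2: "-(\<Sum>\<alpha>\<in>A. \<Sum>\<beta>\<in>A. u \<alpha> * W' \<alpha> \<beta> * u \<beta>) \<le> r * real (card A) * (\<Sum>\<alpha>\<in>A. (u \<alpha>)\<^sup>2)"
    by (simp add: mult.assoc)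
  have "(r * real (card A)) * (\<Sum>\<alpha>\<in>A. (u \<alpha>)\<^sup>2) < \<delta> * (\<Sum>\<alpha>\<in>A. (u \<alpha>)\<^sup>2)"
    using rN S0 by (rule mult_strict_right_mono)
  thus ?thesis using split s1 s2 by linarith
qed

lemma geo_convergent:
  fixes x :: "nat \<Rightarrow> real"
  assumes "\<And>j. \<bar>x (Suc j) - x j\<bar> \<le> C * q ^ j" "0 \<le> q" "q < 1"
  shows "convergent x"
proof -
  have sg: "summable (\<lambda>j. C * q ^ j)" using assms by (intro summable_mult summable_geometric) simp
  have "summable (\<lambda>j. x (Suc j) - x j)"
    by (rule summable_comparison_test[OF _ sg]) (use assms(1) in auto)
  hence "(\<lambda>n. \<Sum>j<n. x (Suc j) - x j) \<longlonglongrightarrow> suminf (\<lambda>j. x (Suc j) - x j)" by (rule summable_LIMSEQ)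
  hence "(\<lambda>n. x n - x 0) \<longlonglongrightarrow> suminf (\<lambda>j. x (Suc j) - x j)" by (simp add: sum_lessThan_telescope)
  hence "(\<lambda>n. x n - x 0 + x 0) \<longlonglongrightarrow> suminf (\<lambda>j. x (Suc j) - x j) + x 0" by (intro tendsto_intros)
  thus ?thesis by (auto simp: convergent_def)
qed

lemma sqrt_pert:
  fixes A :: "'a set" and d :: "'a \<Rightarrow> real" and E :: "'a \<Rightarrow> 'a \<Rightarrow> real"
  assumes fin: "finite A" and ne: "A \<noteq> {}" and \<delta>: "\<delta> > 0" and dd: "\<forall>\<alpha>\<in>A. d \<alpha> \<ge> \<delta>"
    and Es: "\<forall>\<alpha>\<in>A. \<forall>\<beta>\<in>A. E \<alpha> \<beta> = E \<beta> \<alpha>"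
    and Eb: "\<forall>\<alpha>\<in>A. \<forall>\<beta>\<in>A. \<bar>E \<alpha> \<beta>\<bar> \<le> \<delta>\<^sup>2 / (4 * real (card A))"
  shows "\<exists>Z. \<forall>\<alpha>\<in>A. \<forall>\<beta>\<in>A. Z \<alpha> \<beta> = Z \<beta> \<alpha> \<and> \<bar>Z \<alpha> \<beta>\<bar> \<le> \<delta> / (4 * real (card A)) \<and>
          (d \<alpha> + d \<beta>) * Z \<alpha> \<beta> + (\<Sum>\<gamma>\<in>A. Z \<alpha> \<gamma> * Z \<gamma> \<beta>) = E \<alpha> \<beta>"
proof -
  define N where "N = real (card A)"
  have N: "N > 0" using fin ne by (simp add: N_def card_gt_0_iff)
  define r where "r = \<delta> / (4 * N)"
  have r: "r > 0" using N \<delta> by (simp add: r_def)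
  have Nr: "N * r = \<delta> / 4" using N by (simp add: r_def)
  have Eb': "\<forall>\<alpha>\<in>A. \<forall>\<beta>\<in>A. \<bar>E \<alpha> \<beta>\<bar> \<le> \<delta> * r"
    using Eb by (simp add: r_def N_def power2_eq_square)
  define \<Phi> where "\<Phi> = (\<lambda>Z \<alpha> \<beta>. (E \<alpha> \<beta> - (\<Sum>\<gamma>\<in>A. Z \<alpha> \<gamma> * Z \<gamma> \<beta>)) / (d \<alpha> + d \<beta>))"
  have den: "d \<alpha> + d \<beta> \<ge> 2 * \<delta>" if "\<alpha> \<in> A" "\<beta> \<in> A" for \<alpha> \<beta> using dd[rule_format, OF that(1)] dd[rule_format, OF that(2)] by linarith
  have sumbnd: "\<bar>\<Sum>\<gamma>\<in>A. Z \<alpha> \<gamma> * Z \<gamma> \<beta> - Z' \<alpha> \<gamma> * Z' \<gamma> \<beta>\<bar> \<le> N * (2 * r * t)"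
    if "\<alpha> \<in> A" "\<beta> \<in> A" "\<forall>\<alpha>\<in>A. \<forall>\<beta>\<in>A. \<bar>Z \<alpha> \<beta>\<bar> \<le> r" "\<forall>\<alpha>\<in>A. \<forall>\<beta>\<in>A. \<bar>Z' \<alpha> \<beta>\<bar> \<le> r"
       "\<forall>\<alpha>\<in>A. \<forall>\<beta>\<in>A. \<bar>Z \<alpha> \<beta> - Z' \<alpha> \<beta>\<bar> \<le> t" for Z Z' \<alpha> \<beta> t
  proof -
    have t0: "0 \<le> t" using that(5)[rule_format, OF that(1) that(2)] by (meson abs_ge_zero order_trans)
    have "\<bar>\<Sum>\<gamma>\<in>A. Z \<alpha> \<gamma> * Z \<gamma> \<beta> - Z' \<alpha> \<gamma> * Z' \<gamma> \<beta>\<bar> \<le> (\<Sum>\<gamma>\<in>A. \<bar>Z \<alpha> \<gamma> * Z \<gamma> \<beta> - Z' \<alpha> \<gamma> * Z' \<gamma> \<beta>\<bar>)"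
      by (rule sum_abs)
    also have "\<dots> \<le> (\<Sum>\<gamma>\<in>A. r * t + r * t)"
    proof (rule sum_mono)
      fix \<gamma> assume g: "\<gamma> \<in> A"
      have e: "Z \<alpha> \<gamma> * Z \<gamma> \<beta> - Z' \<alpha> \<gamma> * Z' \<gamma> \<beta> = Z \<alpha> \<gamma> * (Z \<gamma> \<beta> - Z' \<gamma> \<beta>) + (Z \<alpha> \<gamma> - Z' \<alpha> \<gamma>) * Z' \<gamma> \<beta>"
        by (simp add: algebra_simps)
      have 1: "\<bar>Z \<alpha> \<gamma> * (Z \<gamma> \<beta> - Z' \<gamma> \<beta>)\<bar> \<le> r * t"
        unfolding abs_mult by (rule mult_mono) (use that g less_imp_le[OF r] t0 in auto)
      have 2: "\<bar>(Z \<alpha> \<gamma> - Z' \<alpha> \<gamma>) * Z' \<gamma> \<beta>\<bar> \<le> t * r"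
        unfolding abs_mult by (rule mult_mono) (use that g less_imp_le[OF r] t0 in auto)
      hence 2: "\<bar>(Z \<alpha> \<gamma> - Z' \<alpha> \<gamma>) * Z' \<gamma> \<beta>\<bar> \<le> r * t" by (simp only: mult.commute)
      show "\<bar>Z \<alpha> \<gamma> * Z \<gamma> \<beta> - Z' \<alpha> \<gamma> * Z' \<gamma> \<beta>\<bar> \<le> r * t + r * t"
        unfolding e using 1 2 abs_triangle_ineq[of "Z \<alpha> \<gamma> * (Z \<gamma> \<beta> - Z' \<gamma> \<beta>)" "(Z \<alpha> \<gamma> - Z' \<alpha> \<gamma>) * Z' \<gamma> \<beta>"]
        by linarith
    qed
    also have "\<dots> = N * (2 * r * t)" by (simp add: N_def algebra_simps)
    finally show ?thesis .
  qed
  have bnd: "\<forall>\<alpha>\<in>A. \<forall>\<beta>\<in>A. \<bar>\<Phi> Z \<alpha> \<beta>\<bar> \<le> r" if Z: "\<forall>\<alpha>\<in>A. \<forall>\<beta>\<in>A. \<bar>Z \<alpha> \<beta>\<bar> \<le> r" for Z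
  proof (intro ballI)
    fix \<alpha> \<beta> assume a: "\<alpha> \<in> A" and b: "\<beta> \<in> A"
    have z0: "\<forall>\<alpha>\<in>A. \<forall>\<beta>\<in>A. \<bar>(\<lambda>_ _. 0::real) \<alpha> \<beta>\<bar> \<le> r" using r by simp
    have "\<forall>\<alpha>\<in>A. \<forall>\<beta>\<in>A. \<bar>Z \<alpha> \<beta> - (\<lambda>_ _. 0::real) \<alpha> \<beta>\<bar> \<le> r" using Z by simp
    from sumbnd[OF a b Z z0 this] have s: "\<bar>\<Sum>\<gamma>\<in>A. Z \<alpha> \<gamma> * Z \<gamma> \<beta>\<bar> \<le> N * (2 * r * r)" by simp
    have "N * (2 * r * r) = \<delta> * r / 2" using Nr by (simp add: algebra_simps)
    hence num: "\<bar>E \<alpha> \<beta> - (\<Sum>\<gamma>\<in>A. Z \<alpha> \<gamma> * Z \<gamma> \<beta>)\<bar> \<le> (d \<alpha> + d \<beta>) * r"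
    proof -
      have e1: "\<bar>E \<alpha> \<beta>\<bar> \<le> \<delta> * r" using Eb' a b by blast
      have m: "2 * (\<delta> * r) \<le> (d \<alpha> + d \<beta>) * r"
        using mult_right_mono[OF den[OF a b] less_imp_le[OF r]] by (simp add: mult.assoc)
      have "0 \<le> \<delta> * r" using r \<delta> by simp
      thus ?thesis using e1 m s \<open>N * (2 * r * r) = \<delta> * r / 2\<close>
        abs_triangle_ineq4[of "E \<alpha> \<beta>" "\<Sum>\<gamma>\<in>A. Z \<alpha> \<gamma> * Z \<gamma> \<beta>"] by linarith
    qed
    have pos: "d \<alpha> + d \<beta> > 0" using den[OF a b] \<delta> by linarith
    have "\<bar>E \<alpha> \<beta> - (\<Sum>\<gamma>\<in>A. Z \<alpha> \<gamma> * Z \<gamma> \<beta>)\<bar> / (d \<alpha> + d \<beta>) \<le> r"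
      by (subst pos_divide_le_eq[OF pos]) (use num in \<open>simp add: algebra_simps\<close>)
    thus "\<bar>\<Phi> Z \<alpha> \<beta>\<bar> \<le> r" unfolding \<Phi>_def abs_divide abs_of_pos[OF pos] .
  qed
  have contr: "\<forall>\<alpha>\<in>A. \<forall>\<beta>\<in>A. \<bar>\<Phi> Z \<alpha> \<beta> - \<Phi> Z' \<alpha> \<beta>\<bar> \<le> t / 4"
    if Z: "\<forall>\<alpha>\<in>A. \<forall>\<beta>\<in>A. \<bar>Z \<alpha> \<beta>\<bar> \<le> r" and Z': "\<forall>\<alpha>\<in>A. \<forall>\<beta>\<in>A. \<bar>Z' \<alpha> \<beta>\<bar> \<le> r"
      and t: "\<forall>\<alpha>\<in>A. \<forall>\<beta>\<in>A. \<bar>Z \<alpha> \<beta> - Z' \<alpha> \<beta>\<bar> \<le> t" for Z Z' t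
  proof (intro ballI)
    fix \<alpha> \<beta> assume a: "\<alpha> \<in> A" and b: "\<beta> \<in> A"
    have pos: "d \<alpha> + d \<beta> > 0" using den[OF a b] \<delta> by linarith
    have t0: "t \<ge> 0" using t[rule_format, OF a b] by (meson abs_ge_zero order_trans)
    have "\<Phi> Z \<alpha> \<beta> - \<Phi> Z' \<alpha> \<beta> = ((E \<alpha> \<beta> - (\<Sum>\<gamma>\<in>A. Z \<alpha> \<gamma> * Z \<gamma> \<beta>)) - (E \<alpha> \<beta> - (\<Sum>\<gamma>\<in>A. Z' \<alpha> \<gamma> * Z' \<gamma> \<beta>))) / (d \<alpha> + d \<beta>)"
      unfolding \<Phi>_def by (rule diff_divide_distrib[symmetric])
    also have "\<dots> = - (\<Sum>\<gamma>\<in>A. Z \<alpha> \<gamma> * Z \<gamma> \<beta> - Z' \<alpha> \<gamma> * Z' \<gamma> \<beta>) / (d \<alpha> + d \<beta>)"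
      by (simp add: sum_subtractf)
    finally have e0: "\<Phi> Z \<alpha> \<beta> - \<Phi> Z' \<alpha> \<beta> = - (\<Sum>\<gamma>\<in>A. Z \<alpha> \<gamma> * Z \<gamma> \<beta> - Z' \<alpha> \<gamma> * Z' \<gamma> \<beta>) / (d \<alpha> + d \<beta>)" .
    have e: "\<bar>\<Phi> Z \<alpha> \<beta> - \<Phi> Z' \<alpha> \<beta>\<bar> = \<bar>\<Sum>\<gamma>\<in>A. Z \<alpha> \<gamma> * Z \<gamma> \<beta> - Z' \<alpha> \<gamma> * Z' \<gamma> \<beta>\<bar> / (d \<alpha> + d \<beta>)"
      by (simp only: e0 abs_divide abs_minus_cancel abs_of_pos[OF pos])
    have s: "\<bar>\<Sum>\<gamma>\<in>A. Z \<alpha> \<gamma> * Z \<gamma> \<beta> - Z' \<alpha> \<gamma> * Z' \<gamma> \<beta>\<bar> \<le> N * (2 * r * t)" by (rule sumbnd[OF a b Z Z' t])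
    have "N * (2 * r * t) = \<delta> * t / 2" using Nr by (simp add: algebra_simps)
    hence "\<bar>\<Sum>\<gamma>\<in>A. Z \<alpha> \<gamma> * Z \<gamma> \<beta> - Z' \<alpha> \<gamma> * Z' \<gamma> \<beta>\<bar> \<le> (d \<alpha> + d \<beta>) * (t / 4)"
    proof -
      have m: "2 * (\<delta> * (t / 4)) \<le> (d \<alpha> + d \<beta>) * (t / 4)"
        using mult_right_mono[OF den[OF a b], of "t/4"] t0 by (simp add: mult.assoc)
      thus ?thesis using s \<open>N * (2 * r * t) = \<delta> * t / 2\<close> by linarith
    qed
    thus "\<bar>\<Phi> Z \<alpha> \<beta> - \<Phi> Z' \<alpha> \<beta>\<bar> \<le> t / 4" unfolding e
      by (subst pos_divide_le_eq[OF pos]) (simp add: algebra_simps)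
  qed
  have symm: "\<forall>\<alpha>\<in>A. \<forall>\<beta>\<in>A. \<Phi> Z \<alpha> \<beta> = \<Phi> Z \<beta> \<alpha>" if Z: "\<forall>\<alpha>\<in>A. \<forall>\<beta>\<in>A. Z \<alpha> \<beta> = Z \<beta> \<alpha>" for Z
  proof (intro ballI)
    fix \<alpha> \<beta> assume a: "\<alpha> \<in> A" and b: "\<beta> \<in> A"
    have "(\<Sum>\<gamma>\<in>A. Z \<alpha> \<gamma> * Z \<gamma> \<beta>) = (\<Sum>\<gamma>\<in>A. Z \<beta> \<gamma> * Z \<gamma> \<alpha>)"
      by (rule sum.cong) (use Z a b in auto)
    thus "\<Phi> Z \<alpha> \<beta> = \<Phi> Z \<beta> \<alpha>" unfolding \<Phi>_def using Es a b by (simp add: add.commute)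
  qed
  define Zs where "Zs = (\<lambda>j. (\<Phi> ^^ j) (\<lambda>_ _. 0))"
  have Zs_Suc: "Zs (Suc j) = \<Phi> (Zs j)" for j by (simp add: Zs_def)
  have P: "(\<forall>\<alpha>\<in>A. \<forall>\<beta>\<in>A. \<bar>Zs j \<alpha> \<beta>\<bar> \<le> r) \<and> (\<forall>\<alpha>\<in>A. \<forall>\<beta>\<in>A. Zs j \<alpha> \<beta> = Zs j \<beta> \<alpha>)" for j
  proof (induction j)
    case 0 thus ?case using r by (simp add: Zs_def)
  next
    case (Suc j) thus ?case unfolding Zs_Suc using bnd symm by blast
  qed
  have Q: "\<forall>\<alpha>\<in>A. \<forall>\<beta>\<in>A. \<bar>Zs (Suc j) \<alpha> \<beta> - Zs j \<alpha> \<beta>\<bar> \<le> r * (1/4) ^ j" for j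
  proof (induction j)
    case 0
    have "\<forall>\<alpha>\<in>A. \<forall>\<beta>\<in>A. \<bar>Zs 1 \<alpha> \<beta>\<bar> \<le> r" using P by blast
    thus ?case by (simp add: Zs_def)
  next
    case (Suc j)
    have "\<forall>\<alpha>\<in>A. \<forall>\<beta>\<in>A. \<bar>\<Phi> (Zs (Suc j)) \<alpha> \<beta> - \<Phi> (Zs j) \<alpha> \<beta>\<bar> \<le> r * (1/4) ^ j / 4"
      by (rule contr) (use P Suc in blast)+
    thus ?case unfolding Zs_Suc[of "Suc j"] Zs_Suc[of j] by (simp add: field_simps)
  qed
  have conv: "convergent (\<lambda>j. Zs j \<alpha> \<beta>)" if "\<alpha> \<in> A" "\<beta> \<in> A" for \<alpha> \<beta>
    by (rule geo_convergent[of _ r "1/4"]) (use Q that in auto)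
  define Z where "Z = (\<lambda>\<alpha> \<beta>. lim (\<lambda>j. Zs j \<alpha> \<beta>))"
  have lim: "(\<lambda>j. Zs j \<alpha> \<beta>) \<longlonglongrightarrow> Z \<alpha> \<beta>" if "\<alpha> \<in> A" "\<beta> \<in> A" for \<alpha> \<beta>
    using conv[OF that] by (simp add: Z_def convergent_LIMSEQ_iff)
  show ?thesis
  proof (intro exI ballI conjI)
    fix \<alpha> \<beta> assume a: "\<alpha> \<in> A" and b: "\<beta> \<in> A"
    show "Z \<alpha> \<beta> = Z \<beta> \<alpha>"
    proof -
      have "(\<lambda>j. Zs j \<alpha> \<beta>) = (\<lambda>j. Zs j \<beta> \<alpha>)" using P a b by auto
      thus ?thesis by (simp add: Z_def)
    qed
    have "(\<lambda>j. \<bar>Zs j \<alpha> \<beta>\<bar>) \<longlonglongrightarrow> \<bar>Z \<alpha> \<beta>\<bar>" by (intro tendsto_intros lim a b)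
    hence "\<bar>Z \<alpha> \<beta>\<bar> \<le> r" by (rule LIMSEQ_le_const2) (use P a b in auto)
    thus "\<bar>Z \<alpha> \<beta>\<bar> \<le> \<delta> / (4 * real (card A))" by (simp add: r_def N_def)
    have pos: "d \<alpha> + d \<beta> > 0" using den[OF a b] \<delta> by linarith
    have "(\<lambda>j. \<Phi> (Zs j) \<alpha> \<beta>) \<longlonglongrightarrow> \<Phi> Z \<alpha> \<beta>"
      unfolding \<Phi>_def using pos a b
      by (intro tendsto_intros lim) auto
    moreover have "(\<lambda>j. \<Phi> (Zs j) \<alpha> \<beta>) \<longlonglongrightarrow> Z \<alpha> \<beta>"
      unfolding Zs_Suc[symmetric] using lim[OF a b] by (rule LIMSEQ_Suc)
    ultimately have "\<Phi> Z \<alpha> \<beta> = Z \<alpha> \<beta>" by (rule LIMSEQ_unique)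
    thus "(d \<alpha> + d \<beta>) * Z \<alpha> \<beta> + (\<Sum>\<gamma>\<in>A. Z \<alpha> \<gamma> * Z \<gamma> \<beta>) = E \<alpha> \<beta>"
      unfolding \<Phi>_def using pos by (simp add: field_simps)
  qed
qed

lemma fin_min_pos:
  fixes f :: "'a \<Rightarrow> real"
  assumes "finite A" "\<forall>x\<in>A. f x > 0"
  shows "\<exists>\<delta>>0. \<forall>x\<in>A. \<delta> \<le> f x"
proof (cases "A = {}")
  case True thus ?thesis by (intro exI[of _ 1]) auto
next
  case False
  have "Min (f ` A) \<in> f ` A" using assms False by (intro Min_in) auto
  hence "Min (f ` A) > 0" using assms by auto
  moreover have "\<forall>x\<in>A. Min (f ` A) \<le> f x" using assms by auto
  ultimately show ?thesis by blast
qed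

lemma pos_def_dom:
  assumes sym: "\<forall>\<alpha>\<in>Nmon n d. \<forall>\<beta>\<in>Nmon n d. G \<alpha> \<beta> = G \<beta> \<alpha>"
    and dd: "\<forall>\<alpha>\<in>Nmon n d. dd \<alpha> \<ge> \<delta>"
    and W: "\<forall>\<alpha>\<in>Nmon n d. \<forall>\<beta>\<in>Nmon n d. \<bar>G \<alpha> \<beta> - (if \<alpha> = \<beta> then dd \<alpha> else 0)\<bar> \<le> r"
    and rN: "r * real (card (Nmon n d)) < \<delta>"
  shows "pos_def n d G"
  unfolding pos_def_def using sym pd_dom[OF fin_Nmon dd W rN] by blast

lemma pos_def_diag:
  assumes "\<forall>\<alpha>\<in>Nmon n d. f \<alpha> > 0"
  shows "pos_def n d (diagm f)"
proof -
  obtain \<delta> where \<delta>: "\<delta> > 0" "\<forall>x\<in>Nmon n d. \<delta> \<le> f x" using fin_min_pos[OF fin_Nmon assms] by blast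
  show ?thesis
    by (rule pos_def_dom[where dd = f and \<delta> = \<delta> and r = 0]) (use \<delta> in \<open>auto simp: diagm_def\<close>)
qed

lemma sq_diag_plus:
  fixes D :: "'a \<Rightarrow> real"
  assumes fin: "finite A" and a: "\<alpha> \<in> A" and b: "\<beta> \<in> A"
  shows "(\<Sum>\<gamma>\<in>A. ((if \<alpha> = \<gamma> then D \<alpha> else 0) + Z \<alpha> \<gamma>) * ((if \<gamma> = \<beta> then D \<gamma> else 0) + Z \<gamma> \<beta>)) =
    (if \<alpha> = \<beta> then D \<alpha> * D \<alpha> else 0) + (D \<alpha> + D \<beta>) * Z \<alpha> \<beta> + (\<Sum>\<gamma>\<in>A. Z \<alpha> \<gamma> * Z \<gamma> \<beta>)"
proof -
  have "(\<Sum>\<gamma>\<in>A. ((if \<alpha> = \<gamma> then D \<alpha> else 0) + Z \<alpha> \<gamma>) * ((if \<gamma> = \<beta> then D \<gamma> else 0) + Z \<gamma> \<beta>)) =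
     (\<Sum>\<gamma>\<in>A. (if \<alpha> = \<gamma> then D \<alpha> * ((if \<gamma> = \<beta> then D \<gamma> else 0) + Z \<gamma> \<beta>) else 0) +
              (if \<gamma> = \<beta> then Z \<alpha> \<gamma> * D \<gamma> else 0) + Z \<alpha> \<gamma> * Z \<gamma> \<beta>)"
    by (intro sum.cong refl) (auto simp: algebra_simps)
  also have "\<dots> = D \<alpha> * ((if \<alpha> = \<beta> then D \<alpha> else 0) + Z \<alpha> \<beta>) + Z \<alpha> \<beta> * D \<beta> + (\<Sum>\<gamma>\<in>A. Z \<alpha> \<gamma> * Z \<gamma> \<beta>)"
    using fin a b by (simp add: sum.distrib sum.delta sum.delta')
  also have "\<dots> = (if \<alpha> = \<beta> then D \<alpha> * D \<alpha> else 0) + (D \<alpha> + D \<beta>) * Z \<alpha> \<beta> + (\<Sum>\<gamma>\<in>A. Z \<alpha> \<gamma> * Z \<gamma> \<beta>)"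
    by (simp add: algebra_simps)
  finally show ?thesis .
qed

lemma sq_diag:
  fixes f :: "mono \<Rightarrow> real"
  assumes fin: "finite A" and a: "\<alpha> \<in> A" and b: "\<beta> \<in> A"
  shows "(\<Sum>\<gamma>\<in>A. diagm f \<alpha> \<gamma> * diagm f \<gamma> \<beta>) = diagm (\<lambda>x. f x * f x) \<alpha> \<beta>"
  using sq_diag_plus[OF fin a b, of f "\<lambda>_ _. 0"] by (simp add: diagm_def)

lemma gram_lin: "gram_poly n d (\<lambda>\<alpha> \<beta>. A \<alpha> \<beta> + t * B \<alpha> \<beta>) \<gamma> = gram_poly n d A \<gamma> + t * gram_poly n d B \<gamma>"
proof -
  have "gram_poly n d (\<lambda>\<alpha> \<beta>. A \<alpha> \<beta> + t * B \<alpha> \<beta>) \<gamma> =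
    (\<Sum>\<alpha>\<in>Nmon n d. \<Sum>\<beta>\<in>Nmon n d. (if (\<lambda>i. \<alpha> i + \<beta> i) = \<gamma> then A \<alpha> \<beta> else 0) + t * (if (\<lambda>i. \<alpha> i + \<beta> i) = \<gamma> then B \<alpha> \<beta> else 0))"
    unfolding gram_poly_def by (intro sum.cong refl) simp
  also have "\<dots> = gram_poly n d A \<gamma> + t * gram_poly n d B \<gamma>"
    unfolding gram_poly_def by (simp add: sum.distrib sum_distrib_left)
  finally show ?thesis .
qed

lemma gram_scale: "gram_poly n d (diagm (\<lambda>_. t)) \<gamma> = t * gram_poly n d (diagm (\<lambda>_. 1)) \<gamma>"
proof -
  have "gram_poly n d (diagm (\<lambda>_. t)) \<gamma> = gram_poly n d (\<lambda>\<alpha> \<beta>. 0 + t * diagm (\<lambda>_. 1) \<alpha> \<beta>) \<gamma>"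
    by (rule arg_cong[where f = "\<lambda>X. gram_poly n d X \<gamma>"]) (auto simp: diagm_def fun_eq_iff)
  also have "\<dots> = gram_poly n d (\<lambda>_ _. 0) \<gamma> + t * gram_poly n d (diagm (\<lambda>_. 1)) \<gamma>" by (rule gram_lin)
  also have "gram_poly n d (\<lambda>_ _. 0) \<gamma> = 0" by (simp add: gram_poly_def)
  finally show ?thesis by simp
qed

lemma pmul_scale: "pmul p (\<lambda>\<gamma>. t * q \<gamma>) \<gamma> = t * pmul p q \<gamma>"
  unfolding pmul_def by (simp add: sum_distrib_left mult_ac)

lemma construction:
  fixes n m k :: nat and g :: "nat \<Rightarrow> rpoly" and R c :: real
  assumes polys: "\<forall>i<m. is_poly n (g i)" and R: "R > 0" and i0m: "i0 < m" and gi0: "g i0 = ball_poly n R"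
    and hk: "\<forall>i<m. hdeg n (g i) \<le> k" and c: "c > 0"
  shows "\<exists>X0 X G0 G. pos_def n k X0 \<and> (\<forall>i<m. pos_def n (k - hdeg n (g i)) (X i)) \<and>
     pos_def n k G0 \<and> (\<forall>i<m. pos_def n (k - hdeg n (g i)) (G i)) \<and>
     (\<forall>\<gamma>. gram_poly n k G0 \<gamma> + (\<Sum>i<m. pmul (g i) (gram_poly n (k - hdeg n (g i)) (G i)) \<gamma>) = pconst c \<gamma>) \<and>
     (\<forall>\<alpha>\<in>Nmon n k. \<forall>\<beta>\<in>Nmon n k. (\<Sum>\<gamma>\<in>Nmon n k. X0 \<alpha> \<gamma> * X0 \<gamma> \<beta>) = G0 \<alpha> \<beta>) \<and>
     (\<forall>i<m. \<forall>\<alpha>\<in>Nmon n (k - hdeg n (g i)). \<forall>\<beta>\<in>Nmon n (k - hdeg n (g i)).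
        (\<Sum>\<gamma>\<in>Nmon n (k - hdeg n (g i)). X i \<alpha> \<gamma> * X i \<gamma> \<beta>) = G i \<alpha> \<beta>)"
proof -
  define h0 where "h0 = hdeg n (ball_poly n R)"
  have h0k: "hdeg n (ball_poly n R) \<le> k" using hk i0m gi0 by metis
  define e where "e = (\<lambda>\<beta>. (c / (2 * R)) * (1 / (2 * R)) ^ mdeg n \<beta>)"
  define e' where "e' = (\<lambda>\<beta>. if \<beta> \<in> Nmon n (k - h0) then e \<beta> else 0)"
  define a where "a = (\<lambda>\<beta>. c * (if \<beta> = zero_mono then 1 else 0) - R * e' \<beta> +
              (\<Sum>j<n. if 1 \<le> \<beta> j then e' (\<lambda>i. \<beta> i - ev1 j 1 i) else 0))"
  have ident: "gram_poly n k (diagm a) \<gamma> + pmul (ball_poly n R) (gram_poly n (k - h0) (diagm e)) \<gamma> = pconst c \<gamma>" for \<gamma>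
    unfolding a_def e'_def h0_def by (rule ball_identity[OF h0k])
  have apos: "\<forall>\<beta>\<in>Nmon n k. a \<beta> > 0"
    unfolding a_def e'_def e_def h0_def using ball_a_pos[OF R c h0k] by blast
  have epos: "\<forall>\<beta>. e \<beta> > 0" using R c by (simp add: e_def)
  define I where "I = {..<m} - {i0}"
  define q1 where "q1 = (\<lambda>\<gamma>. \<Sum>i\<in>I. pmul (g i) (gram_poly n (k - hdeg n (g i)) (diagm (\<lambda>_. 1))) \<gamma>)"
  have q1supp: "\<gamma> \<in> Nmon n (2 * k)" if q: "- q1 \<gamma> \<noteq> 0" for \<gamma>
  proof -
    have "q1 \<gamma> \<noteq> 0" using q by simp
    then obtain i where i: "i \<in> I" "pmul (g i) (gram_poly n (k - hdeg n (g i)) (diagm (\<lambda>_. 1))) \<gamma> \<noteq> 0"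
      unfolding q1_def using sum.not_neutral_contains_not_neutral by blast
    have im: "i < m" using i by (simp add: I_def)
    have "\<gamma> \<in> Nmon n (pdeg n (g i) + 2 * (k - hdeg n (g i)))" by (rule pmul_supp[OF polys[rule_format, OF im] i(2)])
    moreover have "pdeg n (g i) + 2 * (k - hdeg n (g i)) \<le> 2 * k" using pdeg_hdeg[of n "g i"] hk im by auto
    ultimately show ?thesis using Nmon_mono by blast
  qed
  obtain E where Es: "\<forall>\<alpha> \<beta>. E \<alpha> \<beta> = E \<beta> \<alpha>" and gE: "gram_poly n k E = (\<lambda>\<gamma>. - q1 \<gamma>)"
    using gram_rep[of "\<lambda>\<gamma>. - q1 \<gamma>" n k] q1supp by blast
  let ?A = "Nmon n k"
  define N where "N = real (card ?A)"
  have N: "N > 0" using card_Nmon_pos by (simp add: N_def)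
  obtain \<delta>a where \<delta>a: "\<delta>a > 0" "\<forall>\<beta>\<in>?A. \<delta>a \<le> a \<beta>" using fin_min_pos[OF fin_Nmon apos] by blast
  define M where "M = (\<Sum>\<alpha>\<in>?A. \<Sum>\<beta>\<in>?A. \<bar>E \<alpha> \<beta>\<bar>) + 1"
  have EM: "\<bar>E \<alpha> \<beta>\<bar> \<le> M" if "\<alpha> \<in> ?A" "\<beta> \<in> ?A" for \<alpha> \<beta>
  proof -
    have "\<bar>E \<alpha> \<beta>\<bar> \<le> (\<Sum>\<beta>'\<in>?A. \<bar>E \<alpha> \<beta>'\<bar>)" by (rule member_le_sum) (use that fin_Nmon in auto)
    also have "\<dots> \<le> (\<Sum>\<alpha>'\<in>?A. \<Sum>\<beta>'\<in>?A. \<bar>E \<alpha>' \<beta>'\<bar>)"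
      by (rule member_le_sum[where f = "\<lambda>\<alpha>'. \<Sum>\<beta>'\<in>?A. \<bar>E \<alpha>' \<beta>'\<bar>"]) (use that fin_Nmon in \<open>auto intro: sum_nonneg\<close>)
    finally show ?thesis by (simp add: M_def)
  qed
  have "0 \<le> (\<Sum>\<alpha>\<in>?A. \<Sum>\<beta>\<in>?A. \<bar>E \<alpha> \<beta>\<bar>)" by (intro sum_nonneg) simp
  hence M: "M > 0" by (simp add: M_def)
  define t where "t = \<delta>a / (4 * N * M)"
  have t: "t > 0" using \<delta>a N M by (simp add: t_def)
  have tM: "t * M = \<delta>a / (4 * N)" using M N by (simp add: t_def field_simps)
  define G0 where "G0 = (\<lambda>\<alpha> \<beta>. diagm a \<alpha> \<beta> + t * E \<alpha> \<beta>)"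
  define G where "G = (\<lambda>i. if i = i0 then diagm e else diagm (\<lambda>_. t))"
  define \<delta>1 where "\<delta>1 = sqrt \<delta>a"
  have \<delta>1: "\<delta>1 > 0" "\<delta>1\<^sup>2 = \<delta>a" using \<delta>a by (auto simp: \<delta>1_def)
  define D where "D = (\<lambda>\<beta>. sqrt (a \<beta>))"
  have Dge: "\<forall>\<beta>\<in>?A. D \<beta> \<ge> \<delta>1" using \<delta>a by (auto simp: D_def \<delta>1_def)
  have DD: "D \<beta> * D \<beta> = a \<beta>" if "\<beta> \<in> ?A" for \<beta> using apos that by (simp add: D_def less_imp_le)
  have tE: "\<forall>\<alpha>\<in>?A. \<forall>\<beta>\<in>?A. \<bar>t * E \<alpha> \<beta>\<bar> \<le> \<delta>1\<^sup>2 / (4 * real (card ?A))"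
  proof (intro ballI)
    fix \<alpha> \<beta> assume "\<alpha> \<in> ?A" "\<beta> \<in> ?A"
    hence "t * \<bar>E \<alpha> \<beta>\<bar> \<le> t * M" using EM t by (intro mult_left_mono) auto
    thus "\<bar>t * E \<alpha> \<beta>\<bar> \<le> \<delta>1\<^sup>2 / (4 * real (card ?A))" using t tM \<delta>1 by (simp add: abs_mult N_def)
  qed
  have Ane: "?A \<noteq> {}" using zero_in_Nmon by blast
  obtain Z where Z: "\<forall>\<alpha>\<in>?A. \<forall>\<beta>\<in>?A. Z \<alpha> \<beta> = Z \<beta> \<alpha> \<and> \<bar>Z \<alpha> \<beta>\<bar> \<le> \<delta>1 / (4 * real (card ?A)) \<and>
      (D \<alpha> + D \<beta>) * Z \<alpha> \<beta> + (\<Sum>\<gamma>\<in>?A. Z \<alpha> \<gamma> * Z \<gamma> \<beta>) = t * E \<alpha> \<beta>"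
    using sqrt_pert[OF fin_Nmon Ane \<delta>1(1) Dge, of "\<lambda>\<alpha> \<beta>. t * E \<alpha> \<beta>"] Es tE by auto
  define X0 where "X0 = (\<lambda>\<alpha> \<beta>. (if \<alpha> = \<beta> then D \<alpha> else 0) + Z \<alpha> \<beta>)"
  define X where "X = (\<lambda>i. if i = i0 then diagm (\<lambda>\<beta>. sqrt (e \<beta>)) else diagm (\<lambda>_. sqrt t))"
  have hi0: "hdeg n (g i0) = h0" using gi0 by (simp add: h0_def)
  show ?thesis
  proof (intro exI conjI)
    show "pos_def n k X0"
    proof (rule pos_def_dom[where dd = D and \<delta> = \<delta>1 and r = "\<delta>1 / (4 * N)"])
      show "\<forall>\<alpha>\<in>?A. \<forall>\<beta>\<in>?A. X0 \<alpha> \<beta> = X0 \<beta> \<alpha>" using Z by (auto simp: X0_def)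
      show "\<forall>\<alpha>\<in>?A. \<delta>1 \<le> D \<alpha>" using Dge by blast
      show "\<forall>\<alpha>\<in>?A. \<forall>\<beta>\<in>?A. \<bar>X0 \<alpha> \<beta> - (if \<alpha> = \<beta> then D \<alpha> else 0)\<bar> \<le> \<delta>1 / (4 * N)"
        using Z by (simp add: X0_def N_def)
      show "\<delta>1 / (4 * N) * real (card ?A) < \<delta>1" using N \<delta>1 by (simp add: N_def)
    qed
    show "\<forall>i<m. pos_def n (k - hdeg n (g i)) (X i)"
      using epos t by (auto simp: X_def intro!: pos_def_diag)
    show "pos_def n k G0"
    proof (rule pos_def_dom[where dd = a and \<delta> = \<delta>a and r = "t * M"])
      show "\<forall>\<alpha>\<in>?A. \<forall>\<beta>\<in>?A. G0 \<alpha> \<beta> = G0 \<beta> \<alpha>" using Es by (auto simp: G0_def diagm_def)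
      show "\<forall>\<alpha>\<in>?A. \<delta>a \<le> a \<alpha>" using \<delta>a by blast
      show "\<forall>\<alpha>\<in>?A. \<forall>\<beta>\<in>?A. \<bar>G0 \<alpha> \<beta> - (if \<alpha> = \<beta> then a \<alpha> else 0)\<bar> \<le> t * M"
        using EM t by (auto simp: G0_def diagm_def abs_mult intro!: mult_left_mono)
      show "t * M * real (card ?A) < \<delta>a" using tM N \<delta>a by (simp add: N_def)
    qed
    show "\<forall>i<m. pos_def n (k - hdeg n (g i)) (G i)"
      using epos t by (auto simp: G_def intro!: pos_def_diag)
    show "\<forall>\<gamma>. gram_poly n k G0 \<gamma> + (\<Sum>i<m. pmul (g i) (gram_poly n (k - hdeg n (g i)) (G i)) \<gamma>) = pconst c \<gamma>"
    proof
      fix \<gamma>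
      have g0: "gram_poly n k G0 \<gamma> = gram_poly n k (diagm a) \<gamma> - t * q1 \<gamma>"
        unfolding G0_def gram_lin gE by simp
      have sc: "gram_poly n d (diagm (\<lambda>_. t)) = (\<lambda>\<gamma>. t * gram_poly n d (diagm (\<lambda>_. 1)) \<gamma>)" for d
        by (rule ext) (rule gram_scale)
      have "(\<Sum>i<m. pmul (g i) (gram_poly n (k - hdeg n (g i)) (G i)) \<gamma>) =
          pmul (g i0) (gram_poly n (k - hdeg n (g i0)) (G i0)) \<gamma> + (\<Sum>i\<in>I. pmul (g i) (gram_poly n (k - hdeg n (g i)) (G i)) \<gamma>)"
        unfolding I_def using i0m by (intro sum.remove) auto
      also have "(\<Sum>i\<in>I. pmul (g i) (gram_poly n (k - hdeg n (g i)) (G i)) \<gamma>) = t * q1 \<gamma>"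
        unfolding q1_def sum_distrib_left
        by (intro sum.cong refl) (auto simp: I_def G_def sc pmul_scale)
      also have "pmul (g i0) (gram_poly n (k - hdeg n (g i0)) (G i0)) \<gamma> = pmul (ball_poly n R) (gram_poly n (k - h0) (diagm e)) \<gamma>"
        by (simp add: G_def gi0 h0_def)
      finally show "gram_poly n k G0 \<gamma> + (\<Sum>i<m. pmul (g i) (gram_poly n (k - hdeg n (g i)) (G i)) \<gamma>) = pconst c \<gamma>"
        using ident[of \<gamma>] g0 by simp
    qed
    show "\<forall>\<alpha>\<in>?A. \<forall>\<beta>\<in>?A. (\<Sum>\<gamma>\<in>?A. X0 \<alpha> \<gamma> * X0 \<gamma> \<beta>) = G0 \<alpha> \<beta>"
    proof (intro ballI)
      fix \<alpha> \<beta> assume a: "\<alpha> \<in> ?A" and b: "\<beta> \<in> ?A"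
      have "(\<Sum>\<gamma>\<in>?A. X0 \<alpha> \<gamma> * X0 \<gamma> \<beta>) = (if \<alpha> = \<beta> then D \<alpha> * D \<alpha> else 0) + ((D \<alpha> + D \<beta>) * Z \<alpha> \<beta> + (\<Sum>\<gamma>\<in>?A. Z \<alpha> \<gamma> * Z \<gamma> \<beta>))"
        unfolding X0_def using sq_diag_plus[OF fin_Nmon a b, of D Z] by simp
      also have "\<dots> = G0 \<alpha> \<beta>"
      proof -
        have zeq: "(D \<alpha> + D \<beta>) * Z \<alpha> \<beta> + (\<Sum>\<gamma>\<in>?A. Z \<alpha> \<gamma> * Z \<gamma> \<beta>) = t * E \<alpha> \<beta>" using Z a b by blast
        show ?thesis unfolding zeq using DD[OF a] by (auto simp: G0_def diagm_def)
      qed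
      finally show "(\<Sum>\<gamma>\<in>?A. X0 \<alpha> \<gamma> * X0 \<gamma> \<beta>) = G0 \<alpha> \<beta>" .
    qed
    show "\<forall>i<m. \<forall>\<alpha>\<in>Nmon n (k - hdeg n (g i)). \<forall>\<beta>\<in>Nmon n (k - hdeg n (g i)).
        (\<Sum>\<gamma>\<in>Nmon n (k - hdeg n (g i)). X i \<alpha> \<gamma> * X i \<gamma> \<beta>) = G i \<alpha> \<beta>"
    proof (intro allI impI ballI)
      fix i \<alpha> \<beta> assume "i < m" and a: "\<alpha> \<in> Nmon n (k - hdeg n (g i))" and b: "\<beta> \<in> Nmon n (k - hdeg n (g i))"
      show "(\<Sum>\<gamma>\<in>Nmon n (k - hdeg n (g i)). X i \<alpha> \<gamma> * X i \<gamma> \<beta>) = G i \<alpha> \<beta>"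
      proof (cases "i = i0")
        case True
        have "(\<lambda>x. sqrt (e x) * sqrt (e x)) = e" using epos by (auto simp: fun_eq_iff less_imp_le)
        thus ?thesis using True sq_diag[OF fin_Nmon a b, of "\<lambda>x. sqrt (e x)"] by (simp add: X_def G_def)
      next
        case False
        have "(\<lambda>x::mono. sqrt t * sqrt t) = (\<lambda>_. t)" using t by auto
        thus ?thesis using False sq_diag[OF fin_Nmon a b, of "\<lambda>_. sqrt t"] by (simp add: X_def G_def)
      qed
    qed
  qed
qed

theorem theorem2:
  fixes n m l :: nat and f :: rpoly and g h :: "nat \<Rightarrow> rpoly" and R :: real
  assumes "is_poly n f"
    and "\<forall>i<m. is_poly n (g i)"
    and "\<forall>j<l. is_poly n (h j)"
    and "R > 0"
    and "\<exists>i<m. g i = ball_poly n R"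
  shows "(\<forall>k\<ge>kmin n f m g l h. \<forall>c::real. c > 0 \<longrightarrow> pconst c \<in> Qcirc n m g k)
         \<and> CTP n f m g l h"
proof -
  obtain i0 where i0m: "i0 < m" and gi0: "g i0 = ball_poly n R" using assms(5) by blast
  have kge: "\<forall>i<m. hdeg n (g i) \<le> k" if k: "kmin n f m g l h \<le> k" for k
  proof (intro allI impI)
    fix i assume "i < m"
    hence "hdeg n (g i) \<le> kmin n f m g l h" unfolding kmin_def by (intro Max_ge) auto
    thus "hdeg n (g i) \<le> k" using k by simp
  qed
  have P1: "\<forall>k\<ge>kmin n f m g l h. \<forall>c::real. c > 0 \<longrightarrow> pconst c \<in> Qcirc n m g k"
  proof (intro allI impI)
    fix k :: nat and c :: real assume k: "kmin n f m g l h \<le> k" and c: "c > 0"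
    obtain X0 X G0 G where pG0: "pos_def n k G0" and pG: "\<forall>i<m. pos_def n (k - hdeg n (g i)) (G i)"
      and id: "\<forall>\<gamma>. gram_poly n k G0 \<gamma> + (\<Sum>i<m. pmul (g i) (gram_poly n (k - hdeg n (g i)) (G i)) \<gamma>) = pconst c \<gamma>"
      using construction[OF assms(2) assms(4) i0m gi0 kge[OF k] c] by blast
    have eq: "pconst c = (\<lambda>\<gamma>. gram_poly n k G0 \<gamma> + (\<Sum>i<m. pmul (g i) (gram_poly n (k - hdeg n (g i)) (G i)) \<gamma>))"
      using id by (auto simp: fun_eq_iff)
    show "pconst c \<in> Qcirc n m g k" unfolding Qcirc_def using pG0 pG eq by blast
  qed
  have P2: "CTP n f m g l h"
    unfolding CTP_def
  proof (intro allI impI)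
    fix k assume k: "kmin n f m g l h \<le> k"
    obtain X0 X G0 G where pX0: "pos_def n k X0" and pX: "\<forall>i<m. pos_def n (k - hdeg n (g i)) (X i)"
      and id: "\<forall>\<gamma>. gram_poly n k G0 \<gamma> + (\<Sum>i<m. pmul (g i) (gram_poly n (k - hdeg n (g i)) (G i)) \<gamma>) = pconst 1 \<gamma>"
      and sq0: "\<forall>\<alpha>\<in>Nmon n k. \<forall>\<beta>\<in>Nmon n k. (\<Sum>\<gamma>\<in>Nmon n k. X0 \<alpha> \<gamma> * X0 \<gamma> \<beta>) = G0 \<alpha> \<beta>"
      and sqi: "\<forall>i<m. \<forall>\<alpha>\<in>Nmon n (k - hdeg n (g i)). \<forall>\<beta>\<in>Nmon n (k - hdeg n (g i)).
        (\<Sum>\<gamma>\<in>Nmon n (k - hdeg n (g i)). X i \<alpha> \<gamma> * X i \<gamma> \<beta>) = G i \<alpha> \<beta>"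
      using construction[OF assms(2) assms(4) i0m gi0 kge[OF k], of 1] by auto
    let ?F = "Nmon n (2 * k)"
    have fF: "finite ?F" by (rule fin_Nmon)
    have key: "trace_XMX n k X0 (mom_mat y) +
        (\<Sum>i<m. trace_XMX n (k - hdeg n (g i)) (X i) (loc_mat n (g i) y)) = 1" if y0: "y zero_mono = 1" for y
    proof -
      have t0: "trace_XMX n k X0 (mom_mat y) = (\<Sum>\<epsilon>\<in>?F. gram_poly n k G0 \<epsilon> * y \<epsilon>)"
      proof -
        have "trace_XMX n k X0 (mom_mat y) = (\<Sum>\<beta>\<in>Nmon n k. \<Sum>\<gamma>\<in>Nmon n k. mom_mat y \<beta> \<gamma> * G0 \<gamma> \<beta>)"
          unfolding trace_H by (intro sum.cong refl) (simp add: sq0)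
        also have "\<dots> = (\<Sum>\<epsilon>\<in>?F. gram_poly n k G0 \<epsilon> * y \<epsilon>)"
          by (rule Ly_mom[OF fF]) (auto simp: mult_2 intro: Nmon_add)
        finally show ?thesis .
      qed
      have ti: "trace_XMX n (k - hdeg n (g i)) (X i) (loc_mat n (g i) y) =
          (\<Sum>\<epsilon>\<in>?F. pmul (g i) (gram_poly n (k - hdeg n (g i)) (G i)) \<epsilon> * y \<epsilon>)" if im: "i < m" for i
      proof -
        let ?d = "k - hdeg n (g i)"
        have gp: "is_poly n (g i)" using assms(2) im by blast
        have "trace_XMX n ?d (X i) (loc_mat n (g i) y) = (\<Sum>\<beta>\<in>Nmon n ?d. \<Sum>\<gamma>\<in>Nmon n ?d. loc_mat n (g i) y \<beta> \<gamma> * G i \<gamma> \<beta>)"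
          unfolding trace_H using sqi im by (intro sum.cong refl) simp
        also have "\<dots> = (\<Sum>\<epsilon>\<in>?F. pmul (g i) (gram_poly n ?d (G i)) \<epsilon> * y \<epsilon>)"
        proof (rule Ly_loc[OF gp fF])
          show "\<forall>\<epsilon>\<in>?F. fsupp \<epsilon>" using Nmon_fsupp by blast
          show "\<forall>\<delta>. g i \<delta> \<noteq> 0 \<longrightarrow> (\<forall>\<alpha>\<in>Nmon n ?d. \<forall>\<beta>\<in>Nmon n ?d. (\<lambda>j. \<delta> j + \<alpha> j + \<beta> j) \<in> ?F)"
          proof (intro allI impI ballI)
            fix \<delta> \<alpha> \<beta> assume "g i \<delta> \<noteq> 0" "\<alpha> \<in> Nmon n ?d" "\<beta> \<in> Nmon n ?d"
            hence "(\<lambda>j. (\<lambda>j. \<delta> j + \<alpha> j) j + \<beta> j) \<in> Nmon n (pdeg n (g i) + ?d + ?d)"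
              using is_poly_supp(2)[OF gp] by (intro Nmon_add) auto
            moreover have "pdeg n (g i) + ?d + ?d \<le> 2 * k" using pdeg_hdeg[of n "g i"] kge[OF k] im by auto
            ultimately show "(\<lambda>j. \<delta> j + \<alpha> j + \<beta> j) \<in> ?F" using Nmon_mono by auto
          qed
        qed
        finally show ?thesis .
      qed
      have "trace_XMX n k X0 (mom_mat y) + (\<Sum>i<m. trace_XMX n (k - hdeg n (g i)) (X i) (loc_mat n (g i) y))
          = (\<Sum>\<epsilon>\<in>?F. gram_poly n k G0 \<epsilon> * y \<epsilon>) + (\<Sum>i<m. \<Sum>\<epsilon>\<in>?F. pmul (g i) (gram_poly n (k - hdeg n (g i)) (G i)) \<epsilon> * y \<epsilon>)"
        using t0 ti by simp
      also have "\<dots> = (\<Sum>\<epsilon>\<in>?F. (gram_poly n k G0 \<epsilon> + (\<Sum>i<m. pmul (g i) (gram_poly n (k - hdeg n (g i)) (G i)) \<epsilon>)) * y \<epsilon>)"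
        by (simp add: sum.swap[of _ "{..<m}"] sum.distrib sum_distrib_right distrib_right)
      also have "\<dots> = (\<Sum>\<epsilon>\<in>?F. pconst 1 \<epsilon> * y \<epsilon>)" using id by simp
      also have "\<dots> = (\<Sum>\<epsilon>\<in>?F. if \<epsilon> = zero_mono then y \<epsilon> else 0)"
        by (intro sum.cong refl) (simp add: pconst_def)
      also have "\<dots> = 1" using fF y0 by (simp add: sum.delta)
      finally show ?thesis .
    qed
    show "\<exists>a>0. \<exists>X0 X. pos_def n k X0 \<and> (\<forall>i<m. pos_def n (k - hdeg n (g i)) (X i)) \<and>
     (\<forall>y :: mono \<Rightarrow> real.
        (\<forall>j<l. \<forall>\<alpha>\<in>Nmon n (k - hdeg n (h j)). \<forall>\<beta>\<in>Nmon n (k - hdeg n (h j)).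
            loc_mat n (h j) y \<alpha> \<beta> = 0) \<and> y zero_mono = 1 \<longrightarrow>
        trace_XMX n k X0 (mom_mat y) +
        (\<Sum>i<m. trace_XMX n (k - hdeg n (g i)) (X i) (loc_mat n (g i) y)) = a)"
      using pX0 pX key by (intro exI[of _ 1] conjI exI[of _ X0] exI[of _ X]) auto
  qed
  show ?thesis using P1 P2 by blast
qed

end
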